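(* $\mathbb{R}_{\mathcal{E}^2}\subsetneq\mathbb{R}_{\mathcal{E}^3}$; that is, every $\mathcal{E}^2$-computable real is $\mathcal{E}^3$-computable, and there exists a real number $\alpha$ that is $\mathcal{E}^3$-computable but not $\mathcal{E}^2$-computable.
   Context: $\mathbb{N}=\{0,1,2,\dots\}$. Initial functions: $Z(x)=0$, $S(x)=x+1$, projections $P^n_i(x_1,\dots,x_n)=x_i$. Define $f_0(x,y)=x+1$, $f_1(x,y)=x+y$, $f_2(x,y)=xy$, and for $n\ge2$: $f_{n+1}(x,0)=1$, $f_{n+1}(x,y+1)=f_n(x,f_{n+1}(x,y))$. A function $f$ is obtained by primitive recursion from $g:\mathbb{N}^{m-1}\to\mathbb{N}$, $h:\mathbb{N}^{m+1}\to\mathbb{N}$ if $f(0,\bar x)=g(\bar x)$ and $f(x+1,\bar x)=h(x,f(x,\bar x),\bar x)$; it is obtained by bounded primitive recursion from $g,h,j$ if moreover $f(x,\bar x)\le j(x,\bar x)$ for all arguments. The Grzegorczyk class $\mathcal{E}^n$ is the smallest set of functions containing the initial functions and $f_n$ and closed under composition and bounded primitive recursion (with $g,h,j$ in the class). For a class $\mathcal{F}$ of functions $\mathbb{N}^k\to\mathbb{N}$, an $\mathcal{F}$-sequence is $A(x)=\frac{f(x)-g(x)}{h(x)+1}$ with $f,g,h:\mathbb{N}\to\mathbb{N}$ in $\mathcal{F}$, and $\alpha\in\mathbb{R}$ is $\mathcal{F}$-computable if some $\mathcal{F}$-sequence $A$ satisfies $|A(x)-\alpha|\le\frac1{x+1}$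 for all $x$; $\mathbb{R}_{\mathcal{F}}$ denotes the set of $\mathcal{F}$-computable reals. *)

theory Defs
  imports Complex_Main
begin

fun grz_f :: "nat \<Rightarrow> nat \<Rightarrow> nat \<Rightarrow> nat" where
  "grz_f 0 x y = x + 1"
| "grz_f (Suc 0) x y = x + y"
| "grz_f (Suc (Suc 0)) x y = x * y"
| "grz_f (Suc (Suc (Suc n))) x 0 = 1"
| "grz_f (Suc (Suc (Suc n))) x (Suc y) =
     grz_f (Suc (Suc n)) x (grz_f (Suc (Suc (Suc n))) x y)"

text \<open>A k-ary function N^k \<rightarrow> N is represented by a pair (k, F) with
  F :: nat list \<Rightarrow> nat, only its values on lists of length k being relevant.
  grz n is the Grzegorczyk class E^n.\<close>
inductive_set grz :: "nat \<Rightarrow> (nat \<times> (nat list \<Rightarrow> nat)) set" for n :: nat where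
  zero: "(1, \<lambda>xs. 0) \<in> grz n"
| succ: "(1, \<lambda>xs. xs ! 0 + 1) \<in> grz n"
| proj: "i < k \<Longrightarrow> (k, \<lambda>xs. xs ! i) \<in> grz n"
| fn:   "(2, \<lambda>xs. grz_f n (xs ! 0) (xs ! 1)) \<in> grz n"
| comp: "(m, h) \<in> grz n \<Longrightarrow> (\<forall>i<m. (k, gs i) \<in> grz n) \<Longrightarrow>
          (k, \<lambda>xs. h (map (\<lambda>i. gs i xs) [0..<m])) \<in> grz n"
| bprec: "(k, g) \<in> grz n \<Longrightarrow> (k + 2, h) \<in> grz n \<Longrightarrow> (k + 1, j) \<in> grz n \<Longrightarrow>
          (\<forall>x xs. length xs = k \<longrightarrow>
             rec_nat (g xs) (\<lambda>y r. h (y # r # xs)) x \<le> j (x # xs)) \<Longrightarrow>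
          (k + 1, \<lambda>ys. rec_nat (g (tl ys)) (\<lambda>y r. h (y # r # tl ys)) (hd ys)) \<in> grz n"
| ext:  "(k, f) \<in> grz n \<Longrightarrow> (\<forall>xs. length xs = k \<longrightarrow> g xs = f xs) \<Longrightarrow> (k, g) \<in> grz n"

definition grz_unary :: "nat \<Rightarrow> (nat \<Rightarrow> nat) \<Rightarrow> bool" where
  "grz_unary n f \<longleftrightarrow> (1, \<lambda>xs. f (xs ! 0)) \<in> grz n"

definition grz_computable :: "nat \<Rightarrow> real \<Rightarrow> bool" where
  "grz_computable n \<alpha> \<longleftrightarrow>
     (\<exists>f g h. grz_unary n f \<and> grz_unary n g \<and> grz_unary n h \<and>
        (\<forall>x. \<bar>(real (f x) - real (g x)) / (real (h x) + 1) - \<alpha>\<bar> \<le> 1 / (real x + 1)))"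

definition grz_reals :: "nat \<Rightarrow> real set" where
  "grz_reals n = {\<alpha>. grz_computable n \<alpha>}"

end

theory Submission
  imports Defs
begin


lemma grz_comp_list:
  assumes "(m, h) \<in> grz n" "length gl = m" "\<forall>g\<in>set gl. (k, g) \<in> grz n"
  shows "(k, \<lambda>xs. h (map (\<lambda>g. g xs) gl)) \<in> grz n"
proof -
  have "(k, \<lambda>xs. h (map (\<lambda>i. (gl ! i) xs) [0..<m])) \<in> grz n"
    using assms by (intro grz.comp) auto
  moreover have "map (\<lambda>i. (gl ! i) xs) [0..<m] = map (\<lambda>g. g xs) gl" for xs
    using assms(2) by (intro nth_equalityI) auto
  ultimately show ?thesis by simp
qed

lemma grz_ext': "(k, f) \<in> grz n \<Longrightarrow> (\<And>xs. length xs = k \<Longrightarrow> g xs = f xs) \<Longrightarrow> (k, g) \<in> grz n"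
  using grz.ext by blast

lemma grz_zero_k: "0 < k \<Longrightarrow> (k, \<lambda>xs. 0) \<in> grz n"
proof -
  assume k: "0 < k"
  have "(k, \<lambda>xs. (\<lambda>xs. 0::nat) (map (\<lambda>g. g xs) [\<lambda>xs. xs ! 0])) \<in> grz n"
    by (rule grz_comp_list[OF grz.zero, of "[\<lambda>xs. xs!0]"]) (use k grz.proj in auto)
  thus ?thesis by simp
qed

lemma grz_proj': "i < k \<Longrightarrow> (k, \<lambda>xs. xs ! i) \<in> grz n" by (rule grz.proj)

lemma rec_pred: "rec_nat (0::nat) (\<lambda>y r. y) x = x - 1"
  by (cases x) auto

lemma grz_pred: "(1, \<lambda>xs. xs ! 0 - 1) \<in> grz n"
proof -
  have "(1 + 1, \<lambda>ys. rec_nat ((\<lambda>xs. 0::nat) (tl ys)) (\<lambda>y r. (\<lambda>zs. zs ! 0) (y # r # tl ys)) (hd ys)) \<in> grz n"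
  proof (rule grz.bprec)
    show "(1, \<lambda>xs. 0::nat) \<in> grz n" by (rule grz.zero)
    show "(1 + 2, \<lambda>zs. zs ! 0) \<in> grz n" by (rule grz.proj) simp
    show "(1 + 1, \<lambda>zs. zs ! 0) \<in> grz n" by (rule grz.proj) simp
    show "\<forall>x xs. length xs = 1 \<longrightarrow> rec_nat ((\<lambda>xs. 0::nat) xs) (\<lambda>y r. (\<lambda>zs. zs ! 0) (y # r # xs)) x \<le> (x # xs) ! 0"
      by (auto simp: rec_pred)
  qed
  hence "(2, \<lambda>ys. rec_nat (0::nat) (\<lambda>y r. y) (hd ys)) \<in> grz n" by (simp add: numeral_2_eq_2)
  hence "(1, \<lambda>xs. (\<lambda>ys. rec_nat (0::nat) (\<lambda>y r. y) (hd ys)) (map (\<lambda>g. g xs) [\<lambda>xs. xs!0, \<lambda>xs. xs!0])) \<in> grz n"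
    by (rule grz_comp_list) (auto intro: grz.proj)
  thus ?thesis by (simp add: rec_pred)
qed

lemma rec_monus: "rec_nat (x::nat) (\<lambda>y r. r - Suc 0) y = x - y"
  by (induction y) auto

lemma grz_monus: "(2, \<lambda>xs. xs ! 0 - xs ! 1) \<in> grz n"
proof -
  have h: "(3, \<lambda>zs. zs ! 1 - 1) \<in> grz n"
  proof -
    have "(3, \<lambda>xs. (\<lambda>xs. xs ! 0 - 1) (map (\<lambda>g. g xs) [\<lambda>zs. zs ! 1])) \<in> grz n"
      by (rule grz_comp_list[OF grz_pred]) (auto intro: grz.proj)
    thus ?thesis by simp
  qed
  have "(1 + 1, \<lambda>ys. rec_nat ((\<lambda>xs. xs ! 0) (tl ys)) (\<lambda>y r. (\<lambda>zs. zs ! 1 - 1) (y # r # tl ys)) (hd ys)) \<in> grz n"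
  proof (rule grz.bprec)
    show "(1, \<lambda>xs. xs ! 0) \<in> grz n" by (rule grz.proj) simp
    show "(1 + 2, \<lambda>zs. zs ! 1 - 1) \<in> grz n" using h by (simp add: numeral_3_eq_3)
    show "(1 + 1, \<lambda>zs. zs ! 1) \<in> grz n" by (rule grz.proj) simp
    show "\<forall>x xs. length xs = 1 \<longrightarrow> rec_nat ((\<lambda>xs. xs ! 0) xs) (\<lambda>y r. (\<lambda>zs. zs ! 1 - 1) (y # r # xs)) x \<le> (x # xs) ! 1"
      by (auto simp: rec_monus)
  qed
  hence "(2, \<lambda>ys. rec_nat (tl ys ! 0) (\<lambda>y r. r - 1) (hd ys)) \<in> grz n"
    by (simp add: numeral_2_eq_2)
  hence "(2, \<lambda>xs. (\<lambda>ys. rec_nat (tl ys ! 0) (\<lambda>y r. r - 1) (hd ys)) (map (\<lambda>g. g xs) [\<lambda>xs. xs!1, \<lambda>xs. xs!0])) \<in> grz n"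
    by (rule grz_comp_list) (auto intro: grz.proj)
  thus ?thesis by (rule grz_ext') (simp add: rec_monus)
qed

lemma grz_min: "(2, \<lambda>xs. min (xs ! 0) (xs ! 1)) \<in> grz n"
proof -
  have "(2, \<lambda>xs. (\<lambda>xs. xs ! 0 - xs ! 1) (map (\<lambda>g. g xs) [\<lambda>xs. xs!0, \<lambda>xs. xs ! 0 - xs ! 1])) \<in> grz n"
    by (rule grz_comp_list[OF grz_monus]) (use grz_monus in \<open>auto intro: grz.proj\<close>)
  hence "(2, \<lambda>xs. xs ! 0 - (xs ! 0 - xs ! 1)) \<in> grz n" by simp
  thus ?thesis by (rule grz_ext') auto
qed



datatype ex = V nat | Z | S ex | P ex ex | R ex ex ex ex | L ex ex

fun sem :: "ex \<Rightarrow> nat list \<Rightarrow> nat" where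
  "sem (V i) env = (if i < length env then env ! i else 0)"
| "sem Z env = 0"
| "sem (S e) env = Suc (sem e env)"
| "sem (P a b) env = sem a env ^ sem b env"
| "sem (R n g h c) env = rec_nat (min (sem c env) (sem g env))
      (\<lambda>y r. min (sem c env) (sem h (y # r # env))) (sem n env)"
| "sem (L a b) env = sem b (sem a env # env)"

lemma rec_min_le: "rec_nat (min (c::nat) a) (\<lambda>y r. min c (f y r)) x \<le> c"
  by (cases x) auto

lemma grz_f3: "grz_f 3 x y = x ^ y"
  by (induction y) (auto simp: numeral_3_eq_3)

lemma grz_pow3: "(2, \<lambda>xs. xs ! 0 ^ xs ! 1) \<in> grz 3"
  using grz.fn[of 3] by (simp add: grz_f3)

lemma map_drop_eq: "length zs = k + d \<Longrightarrow> map (\<lambda>i. zs ! (i + d)) [0..<k] = drop d zs"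
  by (intro nth_equalityI) (auto simp: add.commute)

lemma grz_drop:
  assumes "(k, f) \<in> grz 3"
  shows "(k + d, \<lambda>zs. f (drop d zs)) \<in> grz 3"
proof -
  have "(k + d, \<lambda>zs. f (map (\<lambda>g. g zs) (map (\<lambda>i zs. zs ! (i + d)) [0..<k]))) \<in> grz 3"
    by (rule grz_comp_list[OF assms]) (auto intro: grz.proj)
  thus ?thesis by (rule grz_ext') (simp add: map_drop_eq comp_def)
qed

lemma grz_sem: "0 < k \<Longrightarrow> (k, \<lambda>xs. sem e xs) \<in> grz 3"
proof (induction e arbitrary: k)
  case (V i)
  show ?case
  proof (cases "i < k")
    case True
    show ?thesis by (rule grz_ext'[OF grz.proj[OF True]]) (use True in simp)
  next
    case False
    show ?thesis by (rule grz_ext'[OF grz_zero_k[OF V]]) (use False in simp)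
  qed
next
  case Z
  then show ?case using grz_zero_k by simp
next
  case (S e)
  have "(k, \<lambda>xs. (\<lambda>xs. xs ! 0 + 1) (map (\<lambda>g. g xs) [sem e])) \<in> grz 3"
    by (rule grz_comp_list[OF grz.succ]) (use S in auto)
  then show ?case by simp
next
  case (P a b)
  have "(k, \<lambda>xs. (\<lambda>xs. xs ! 0 ^ xs ! 1) (map (\<lambda>g. g xs) [sem a, sem b])) \<in> grz 3"
    by (rule grz_comp_list[OF grz_pow3]) (use P in auto)
  then show ?case by simp
next
  case (L a b)
  have X: "(k, \<lambda>xs. sem b (map (\<lambda>g. g xs) (sem a # map (\<lambda>i xs. xs ! i) [0..<k]))) \<in> grz 3"
    by (rule grz_comp_list[OF L.IH(2)]) (use L in \<open>auto intro: grz.proj\<close>)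
  have M: "map (\<lambda>i. xs ! i) [0..<length xs] = xs" for xs :: "nat list"
    by (rule map_nth)
  show ?case by (rule grz_ext'[OF X]) (simp add: comp_def; metis M)
next
  case (R n g h c)
  have Gm: "(k, \<lambda>xs. min (sem c xs) (sem g xs)) \<in> grz 3"
  proof -
    have "(k, \<lambda>xs. (\<lambda>xs. min (xs ! 0) (xs ! 1)) (map (\<lambda>g. g xs) [sem c, sem g])) \<in> grz 3"
      by (rule grz_comp_list[OF grz_min]) (use R in auto)
    thus ?thesis by simp
  qed
  have Hm: "(k + 2, \<lambda>zs. min (sem c (drop 2 zs)) (sem h zs)) \<in> grz 3"
  proof -
    have "(k + 2, \<lambda>xs. (\<lambda>xs. min (xs ! 0) (xs ! 1)) (map (\<lambda>g. g xs) [\<lambda>zs. sem c (drop 2 zs), sem h])) \<in> grz 3"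
      using grz_drop[OF R.IH(4)[OF R.prems], of 2] R.IH(3)[of "k+2"] by (intro grz_comp_list[OF grz_min]) auto
    thus ?thesis by simp
  qed
  have J: "(k + 1, \<lambda>zs. sem c (drop 1 zs)) \<in> grz 3"
    using grz_drop[OF R.IH(4)[OF R.prems], of 1] by simp
  have "(k + 1, \<lambda>ys. rec_nat ((\<lambda>xs. min (sem c xs) (sem g xs)) (tl ys))
          (\<lambda>y r. (\<lambda>zs. min (sem c (drop 2 zs)) (sem h zs)) (y # r # tl ys)) (hd ys)) \<in> grz 3"
  proof (rule grz.bprec[OF Gm Hm J])
    show "\<forall>x xs. length xs = k \<longrightarrow>
      rec_nat (min (sem c xs) (sem g xs)) (\<lambda>y r. min (sem c (drop 2 (y # r # xs))) (sem h (y # r # xs))) x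
      \<le> sem c (drop 1 (x # xs))"
      by (auto simp: rec_min_le)
  qed
  hence F: "(k + 1, \<lambda>ys. rec_nat (min (sem c (tl ys)) (sem g (tl ys)))
          (\<lambda>y r. min (sem c (tl ys)) (sem h (y # r # tl ys))) (hd ys)) \<in> grz 3"
    by simp
  have "(k, \<lambda>xs. (\<lambda>ys. rec_nat (min (sem c (tl ys)) (sem g (tl ys)))
          (\<lambda>y r. min (sem c (tl ys)) (sem h (y # r # tl ys))) (hd ys))
          (map (\<lambda>g. g xs) (sem n # map (\<lambda>i xs. xs ! i) [0..<k]))) \<in> grz 3"
    by (rule grz_comp_list[OF F]) (use R in \<open>auto intro: grz.proj\<close>)
  note X = this
  have M: "map (\<lambda>i. xs ! i) [0..<length xs] = xs" for xs :: "nat list"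
    by (rule map_nth)
  show ?case by (rule grz_ext'[OF X]) (simp add: comp_def; metis M)
qed



fun shc :: "nat \<Rightarrow> nat \<Rightarrow> ex \<Rightarrow> ex" where
  "shc k d (V i) = (if i < k then V i else V (i + d))"
| "shc k d Z = Z"
| "shc k d (S e) = S (shc k d e)"
| "shc k d (P a b) = P (shc k d a) (shc k d b)"
| "shc k d (R n g h c) = R (shc k d n) (shc k d g) (shc (k + 2) d h) (shc k d c)"
| "shc k d (L a b) = L (shc k d a) (shc (k + 1) d b)"

lemma sem_shc:
  "k \<le> length env \<Longrightarrow> length ys = d \<Longrightarrow>
   sem (shc k d e) (take k env @ ys @ drop k env) = sem e env"
proof (induction e arbitrary: k env)
  case (V i)
  then show ?case by (auto simp: nth_append min_def)
next
  case (R n g h c)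
  have "sem (shc (k + 2) d h) (y # r # take k env @ ys @ drop k env) = sem h (y # r # env)" for y r
    using R.IH(3)[of "k+2" "y # r # env"] R.prems by simp
  then show ?case using R by simp
next
  case (L a b)
  have "sem (shc (k + 1) d b) (v # take k env @ ys @ drop k env) = sem b (v # env)" for v
    using L.IH(2)[of "k+1" "v # env"] L.prems by simp
  then show ?case using L by simp
qed auto

abbreviation lift1 where "lift1 \<equiv> shc 0 (Suc 0)"
abbreviation lift2 where "lift2 \<equiv> shc 0 (Suc (Suc 0))"

lemma sem_lift1[simp]: "sem (lift1 e) (a # env) = sem e env"
  using sem_shc[of 0 env "[a]" "Suc 0" e] by simp
lemma sem_lift2[simp]: "sem (lift2 e) (a # b # env) = sem e env"
  using sem_shc[of 0 env "[a,b]" "Suc (Suc 0)" e] by simp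
lemma sem_shc11[simp]: "sem (shc 1 1 e) (a # b # env) = sem e (a # env)"
  using sem_shc[of 1 "a # env" "[b]" 1 e] by simp
lemma sem_shc11'[simp]: "sem (shc (Suc 0) (Suc 0) e) (a # b # env) = sem e (a # env)"
  using sem_shc11 by simp

declare sem.simps(5)[simp del]

lemma sem_R:
  assumes "\<forall>y\<le>sem n env. rec_nat (sem g env) (\<lambda>y r. sem h (y # r # env)) y \<le> sem c env"
  shows "sem (R n g h c) env = rec_nat (sem g env) (\<lambda>y r. sem h (y # r # env)) (sem n env)"
proof -
  have "\<forall>y\<le>sem n env. rec_nat (min (sem c env) (sem g env)) (\<lambda>y r. min (sem c env) (sem h (y # r # env))) y
     = rec_nat (sem g env) (\<lambda>y r. sem h (y # r # env)) y"
  proof (intro allI impI)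
    fix y assume "y \<le> sem n env"
    thus "rec_nat (min (sem c env) (sem g env)) (\<lambda>y r. min (sem c env) (sem h (y # r # env))) y
     = rec_nat (sem g env) (\<lambda>y r. sem h (y # r # env)) y"
    proof (induction y)
      case 0 then show ?case using assms by (metis min.absorb2 old.nat.simps(6))
    next
      case (Suc y)
      have "rec_nat (sem g env) (\<lambda>y r. sem h (y # r # env)) (Suc y) \<le> sem c env"
        using assms Suc.prems by blast
      then show ?case using Suc by simp
    qed
  qed
  thus ?thesis by (simp add: sem.simps(5))
qed

fun Cn :: "nat \<Rightarrow> ex" where "Cn 0 = Z" | "Cn (Suc c) = S (Cn c)"
lemma sem_Cn[simp]: "sem (Cn c) env = c" by (induction c) auto
declare Cn.simps[simp del]

lemma pow_bound: "(b + 1) * (a + 2) \<le> ((a::nat) + 2) ^ (b + 1)"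
proof (induction b)
  case 0 then show ?case by simp
next
  case (Suc b)
  have h1: "b + 2 \<le> (b + 1) * (a + 2)" by (simp add: algebra_simps)
  have "(Suc b + 1) * (a + 2) \<le> ((b + 1) * (a + 2)) * (a + 2)"
    by (rule mult_le_mono1) (use h1 in simp)
  also have "\<dots> \<le> (a + 2) ^ (b + 1) * (a + 2)" by (rule mult_le_mono1) (rule Suc.IH)
  finally show ?case by (simp add: mult.commute)
qed

definition Add :: "ex \<Rightarrow> ex \<Rightarrow> ex" where
  "Add a b = R b a (S (V 1)) (P (S (S a)) (S b))"

lemma rec_add: "rec_nat (a::nat) (\<lambda>y r. Suc r) y = a + y" by (induction y) auto

lemma sem_Add[simp]: "sem (Add a b) env = sem a env + sem b env"
proof -
  have "sem a env + y \<le> (sem a env + 2) ^ (sem b env + 1)" if "y \<le> sem b env" for y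
    using pow_bound[of "sem b env" "sem a env"] that by (simp add: algebra_simps)
  thus ?thesis unfolding Add_def by (subst sem_R) (auto simp: rec_add)
qed

definition Mul :: "ex \<Rightarrow> ex \<Rightarrow> ex" where
  "Mul a b = R b Z (Add (V 1) (lift2 a)) (P (S (S a)) (S b))"

lemma rec_mul: "rec_nat 0 (\<lambda>y r. r + (a::nat)) y = a * y" by (induction y) auto

lemma sem_Mul[simp]: "sem (Mul a b) env = sem a env * sem b env"
proof -
  have "sem a env * y \<le> (sem a env + 2) ^ (sem b env + 1)" if "y \<le> sem b env" for y
  proof -
    have "sem a env * y \<le> sem a env * sem b env" using that by simp
    also have "\<dots> \<le> (sem b env + 1) * (sem a env + 2)" by (simp add: algebra_simps)
    finally have "sem a env * y \<le> (sem b env + 1) * (sem a env + 2)" .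
    thus ?thesis using pow_bound[of "sem b env" "sem a env"] by (simp add: mult.commute)
  qed
  thus ?thesis unfolding Mul_def by (subst sem_R) (auto simp: rec_mul)
qed

definition Pred :: "ex \<Rightarrow> ex" where "Pred e = R e Z (V 0) e"

lemma sem_Pred[simp]: "sem (Pred e) env = sem e env - 1"
proof -
  have "rec_nat 0 (\<lambda>y r. y) y = y - 1" for y :: nat by (cases y) auto
  thus ?thesis unfolding Pred_def by (subst sem_R) auto
qed

definition Sub :: "ex \<Rightarrow> ex \<Rightarrow> ex" where "Sub a b = R b a (Pred (V 1)) a"

lemma sem_Sub[simp]: "sem (Sub a b) env = sem a env - sem b env"
proof -
  have "rec_nat (a::nat) (\<lambda>y r. r - 1) y = a - y" for a y by (induction y) auto
  thus ?thesis unfolding Sub_def by (subst sem_R) auto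
qed

definition Min :: "ex \<Rightarrow> ex \<Rightarrow> ex" where "Min a b = Sub a (Sub a b)"
lemma sem_Min[simp]: "sem (Min a b) env = min (sem a env) (sem b env)"
  unfolding Min_def by simp

definition IfZ :: "ex \<Rightarrow> ex \<Rightarrow> ex \<Rightarrow> ex" where
  "IfZ c a b = Add (Mul a (Sub (Cn 1) c)) (Mul b (Sub (Cn 1) (Sub (Cn 1) c)))"
lemma sem_IfZ[simp]: "sem (IfZ c a b) env = (if sem c env = 0 then sem a env else sem b env)"
  unfolding IfZ_def by simp

definition IfEq :: "ex \<Rightarrow> ex \<Rightarrow> ex \<Rightarrow> ex \<Rightarrow> ex" where
  "IfEq x y a b = IfZ (Add (Sub x y) (Sub y x)) a b"
lemma sem_IfEq[simp]: "sem (IfEq x y a b) env = (if sem x env = sem y env then sem a env else sem b env)"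
  unfolding IfEq_def by auto

definition IfLt :: "ex \<Rightarrow> ex \<Rightarrow> ex \<Rightarrow> ex \<Rightarrow> ex" where
  "IfLt x y a b = IfZ (Sub (S x) y) a b"
lemma sem_IfLt[simp]: "sem (IfLt x y a b) env = (if sem x env < sem y env then sem a env else sem b env)"
  unfolding IfLt_def by auto

definition BSum :: "ex \<Rightarrow> ex \<Rightarrow> ex \<Rightarrow> ex" where
  "BSum n b c = R n Z (Add (V 1) (shc (Suc 0) (Suc 0) b)) c"

lemma rec_sum: "rec_nat 0 (\<lambda>y r. r + f y) n = (\<Sum>i<n. f i :: nat)"
  by (induction n) auto

lemma sem_BSum:
  assumes "(\<Sum>i<sem n env. sem b (i # env)) \<le> sem c env"
  shows "sem (BSum n b c) env = (\<Sum>i<sem n env. sem b (i # env))"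
proof -
  have "(\<Sum>i<y. sem b (i # env)) \<le> sem c env" if "y \<le> sem n env" for y
  proof -
    have "(\<Sum>i<y. sem b (i # env)) \<le> (\<Sum>i<sem n env. sem b (i # env))"
      by (rule sum_mono2) (use that in auto)
    thus ?thesis using assms by linarith
  qed
  thus ?thesis unfolding BSum_def by (subst sem_R) (auto simp: rec_sum)
qed

definition Div :: "ex \<Rightarrow> ex \<Rightarrow> ex" where
  "Div a b = IfEq b Z Z (BSum a (IfLt (lift1 a) (Mul (S (V 0)) (lift1 b)) Z (Cn 1)) a)"

lemma sum_lt_count: "q \<le> a \<Longrightarrow> (\<Sum>i<a. if i < q then 1 else 0) = (q::nat)"
proof (induction a)
  case 0 then show ?case by simp
next
  case (Suc a)
  then show ?case by (cases "q = Suc a") auto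
qed

lemma sem_Div[simp]: "sem (Div a b) env = sem a env div sem b env"
proof (cases "sem b env = 0")
  case True then show ?thesis unfolding Div_def by simp
next
  case False
  let ?a = "sem a env" and ?b = "sem b env"
  have eq: "(\<Sum>i<?a. sem (IfLt (lift1 a) (Mul (S (V 0)) (lift1 b)) Z (Cn 1)) (i # env))
      = (\<Sum>i<?a. if i < ?a div ?b then 1 else 0)"
  proof (intro sum.cong refl)
    fix i
    have "(?a < Suc i * ?b) = (\<not> i < ?a div ?b)"
      using div_less_iff_less_mult[of ?b ?a "Suc i"] False by auto
    thus "sem (IfLt (lift1 a) (Mul (S (V 0)) (lift1 b)) Z (Cn 1)) (i # env) = (if i < ?a div ?b then 1 else 0)"
      by simp
  qed
  have q: "?a div ?b \<le> ?a" by simp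
  let ?body = "IfLt (lift1 a) (Mul (S (V 0)) (lift1 b)) Z (Cn 1)"
  have s1: "(\<Sum>i<?a. sem ?body (i # env)) = ?a div ?b" using eq sum_lt_count[OF q] by simp
  have s: "sem (BSum a ?body a) env = ?a div ?b" using sem_BSum[where n=a and b="?body" and c=a and env=env] s1 q by simp
  show ?thesis unfolding Div_def using False s by simp
qed

definition Mod :: "ex \<Rightarrow> ex \<Rightarrow> ex" where "Mod a b = Sub a (Mul b (Div a b))"
lemma sem_Mod[simp]: "sem (Mod a b) env = sem a env mod sem b env"
  unfolding Mod_def by (simp add: minus_mult_div_eq_mod)



definition pair :: "nat \<Rightarrow> nat \<Rightarrow> nat" where "pair a b = 2 ^ a * (2 * b + 1)"
definition pi1 :: "nat \<Rightarrow> nat" where "pi1 n = (\<Sum>k<n. if n mod 2 ^ (k + 1) = 0 then 1 else 0)"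
definition pi2 :: "nat \<Rightarrow> nat" where "pi2 n = (n div 2 ^ pi1 n - 1) div 2"

lemma pair_gt1: "a < pair a b"
proof -
  have "a < 2 ^ a" by (rule less_exp)
  also have "\<dots> \<le> pair a b" unfolding pair_def by simp
  finally show ?thesis .
qed

lemma pair_gt2: "b < pair a b"
proof -
  have "b < 2 * b + 1" by simp
  also have "\<dots> \<le> pair a b" unfolding pair_def using mult_le_mono1[of 1 "2^a" "2*b+1"] by simp
  finally show ?thesis .
qed

lemma pair_pos: "0 < pair a b" unfolding pair_def by simp

lemma pair_dvd_iff: "(2 ^ (k + 1) dvd pair a b) = (k < a)"
proof
  assume "k < a"
  hence "2 ^ (k + 1) dvd (2::nat) ^ a" by (intro le_imp_power_dvd) simp
  thus "2 ^ (k + 1) dvd pair a b" unfolding pair_def by (rule dvd_mult2)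
next
  assume d: "2 ^ (k + 1) dvd pair a b"
  show "k < a"
  proof (rule ccontr)
    assume "\<not> k < a"
    hence "2 ^ (a + 1) dvd (2::nat) ^ (k + 1)" by (intro le_imp_power_dvd) simp
    with d have "2 ^ a * 2 dvd 2 ^ a * (2 * b + 1)" unfolding pair_def
      by (metis dvd_trans power_Suc2 Suc_eq_plus1)
    hence "(2::nat) dvd 2 * b + 1" by (subst (asm) nat_mult_dvd_cancel_disj) simp
    thus False by simp
  qed
qed

lemma sum_lt_count': "q \<le> a \<Longrightarrow> (\<Sum>i<a. if i < q then 1 else 0) = (q::nat)"
  by (rule sum_lt_count)

lemma pi1_pair[simp]: "pi1 (pair a b) = a"
proof -
  have "pi1 (pair a b) = (\<Sum>k<pair a b. if k < a then 1 else 0)"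
    unfolding pi1_def
  proof (intro sum.cong refl)
    fix x show "(if pair a b mod 2 ^ (x + 1) = 0 then 1 else 0) = (if x < a then 1 else (0::nat))"
      using pair_dvd_iff[of x a b] by (simp only: dvd_eq_mod_eq_0)
  qed
  also have "\<dots> = a" using pair_gt1[of a b] by (intro sum_lt_count) simp
  finally show ?thesis .
qed

lemma pi2_pair[simp]: "pi2 (pair a b) = b"
  unfolding pi2_def pi1_pair by (simp add: pair_def)

lemma pi1_0[simp]: "pi1 0 = 0" by (simp add: pi1_def)
lemma pi2_0[simp]: "pi2 0 = 0" by (simp add: pi2_def)

lemma pi2_le: "pi2 n \<le> n"
proof -
  have "pi2 n \<le> n div 2 ^ pi1 n" unfolding pi2_def by simp
  also have "\<dots> \<le> n" by simp
  finally show ?thesis .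
qed

lemma pi1_le: "pi1 n \<le> n"
proof -
  have "pi1 n \<le> (\<Sum>k<n. 1)" unfolding pi1_def by (intro sum_mono) simp
  thus ?thesis by simp
qed

definition tl2 :: "nat \<Rightarrow> nat \<Rightarrow> nat" where "tl2 i w = (pi2 ^^ i) w"
definition elem :: "nat \<Rightarrow> nat \<Rightarrow> nat" where "elem w i = pi1 (tl2 i w)"
definition len :: "nat \<Rightarrow> nat" where "len w = (\<Sum>i<w. if tl2 i w = 0 then 0 else 1)"
definition dig :: "nat \<Rightarrow> nat \<Rightarrow> nat \<Rightarrow> nat" where "dig B a i = a div B ^ i mod B"

lemma tl2_le: "tl2 i w \<le> w"
  unfolding tl2_def by (induction i) (auto intro: le_trans[OF pi2_le])

primrec lcode :: "nat list \<Rightarrow> nat" where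
  "lcode [] = 0" | "lcode (c # cs) = pair c (lcode cs)"

lemma pi2_lcode: "pi2 (lcode cs) = lcode (tl cs)" by (cases cs) auto

lemma tl2_lcode: "tl2 i (lcode cs) = lcode (drop i cs)"
  unfolding tl2_def
proof (induction i)
  case 0 then show ?case by simp
next
  case (Suc i) then show ?case by (simp add: pi2_lcode drop_Suc tl_drop)
qed

lemma lcode_0_iff: "(lcode cs = 0) = (cs = [])"
  by (cases cs) (auto simp: pair_pos[THEN less_not_refl2, OF ])

lemma elem_lcode: "i < length cs \<Longrightarrow> elem (lcode cs) i = cs ! i"
  unfolding elem_def tl2_lcode by (simp add: Cons_nth_drop_Suc[symmetric])

lemma length_le_lcode: "length cs \<le> lcode cs"
proof (induction cs)
  case (Cons c cs) then show ?case using pair_gt2[of "lcode cs" c] by simp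
qed simp

lemma len_lcode: "len (lcode cs) = length cs"
proof -
  have "len (lcode cs) = (\<Sum>i<lcode cs. if i < length cs then 1 else 0)"
    unfolding len_def tl2_lcode by (intro sum.cong refl) (auto simp: lcode_0_iff)
  also have "\<dots> = length cs" by (intro sum_lt_count length_le_lcode)
  finally show ?thesis .
qed

lemma lcode_nth_less: "i < length cs \<Longrightarrow> cs ! i < lcode cs"
proof (induction cs arbitrary: i)
  case (Cons c cs)
  show ?case
  proof (cases i)
    case 0 then show ?thesis using pair_gt1 by simp
  next
    case (Suc j)
    hence "cs ! j < lcode cs" using Cons by simp
    then show ?thesis using Suc pair_gt2[of "lcode cs" c] by simp
  qed
qed simp

primrec acode :: "nat \<Rightarrow> nat list \<Rightarrow> nat" where
  "acode B [] = 0" | "acode B (x # xs) = x + B * acode B xs"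

definition nth0 :: "nat list \<Rightarrow> nat \<Rightarrow> nat" where
  "nth0 xs i = (if i < length xs then xs ! i else 0)"

lemma dig_acode: "\<forall>x\<in>set xs. x < B \<Longrightarrow> dig B (acode B xs) i = nth0 xs i"
proof (induction xs arbitrary: i)
  case Nil then show ?case by (simp add: dig_def nth0_def)
next
  case (Cons x xs)
  hence B: "0 < B" by auto
  show ?case
  proof (cases i)
    case 0 then show ?thesis using Cons by (simp add: dig_def nth0_def)
  next
    case (Suc j)
    have "(x + B * acode B xs) div B ^ Suc j = ((x + B * acode B xs) div B) div B ^ j"
      by (simp add: div_mult2_eq)
    also have "(x + B * acode B xs) div B = acode B xs" using Cons B by simp
    finally show ?thesis using Cons Suc by (simp add: dig_def nth0_def)
  qed
qed

lemma acode_less: "\<forall>x\<in>set xs. x < B \<Longrightarrow> acode B xs < B ^ length xs"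
proof (induction xs)
  case (Cons x xs)
  hence "x + B * acode B xs < B + B * acode B xs" by simp
  also have "\<dots> = B * (acode B xs + 1)" by (simp add: algebra_simps)
  also have "\<dots> \<le> B * B ^ length xs" using Cons by (intro mult_le_mono2) simp
  finally show ?case by simp
qed simp

lemma acode_div: "\<forall>x\<in>set xs. x < B \<Longrightarrow> acode B xs div B = acode B (tl xs)"
  by (cases xs) auto

lemma acode_sum: "acode B xs = (\<Sum>i<length xs. xs ! i * B ^ i)"
proof (induction xs)
  case Nil then show ?case by simp
next
  case (Cons x xs)
  have "(\<Sum>i<length (x # xs). (x # xs) ! i * B ^ i) = x + (\<Sum>i<length xs. xs ! i * B ^ Suc i)"
    by (simp add: sum.lessThan_Suc_shift del: sum.lessThan_Suc)
  also have "\<dots> = x + B * acode B xs" using Cons by (simp add: sum_distrib_left algebra_simps)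
  finally show ?case by simp
qed

lemma sum_digits_less: "(\<forall>j<M. s j < B) \<Longrightarrow> (\<Sum>j<M. s j * B ^ j) < (B::nat) ^ M"
proof (induction M)
  case 0 then show ?case by simp
next
  case (Suc M)
  have "(\<Sum>j<Suc M. s j * B ^ j) = (\<Sum>j<M. s j * B ^ j) + s M * B ^ M" by simp
  also have "\<dots> < B ^ M + s M * B ^ M" using Suc by simp
  also have "\<dots> = (s M + 1) * B ^ M" by (simp add: algebra_simps)
  also have "\<dots> \<le> B * B ^ M"
  proof -
    have "s M < B" using Suc.prems by simp
    thus ?thesis by (intro mult_le_mono1) simp
  qed
  finally show ?case by simp
qed

lemma dig_sum: "(\<forall>j<M. s j < B) \<Longrightarrow> idx < M \<Longrightarrow> dig B (\<Sum>j<M. s j * B ^ j) idx = s idx"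
proof (induction M)
  case 0 then show ?case by simp
next
  case (Suc M)
  have B: "0 < B" using Suc by (metis gr0I not_less0 zero_less_Suc)
  let ?X = "\<Sum>j<M. s j * B ^ j"
  have X: "?X < B ^ M" using Suc by (intro sum_digits_less) simp
  have eq: "(\<Sum>j<Suc M. s j * B ^ j) = ?X + s M * B ^ M" by simp
  show ?case
  proof (cases "idx < M")
    case True
    have "B ^ M = B ^ idx * (B * B ^ (M - Suc idx))"
      using True by (simp flip: power_add power_Suc)
    hence e1: "?X + s M * B ^ M = ?X + B ^ idx * (B * (s M * B ^ (M - Suc idx)))"
      by (simp add: ac_simps)
    have "(?X + s M * B ^ M) div B ^ idx = ?X div B ^ idx + B * (s M * B ^ (M - Suc idx))"
      unfolding e1 using B by (simp add: div_mult_self2)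
    hence "dig B (?X + s M * B ^ M) idx = dig B ?X idx"
      unfolding dig_def by (simp add: mod_mult_self2)
    then show ?thesis using Suc True eq by simp
  next
    case False
    hence idx: "idx = M" using Suc by simp
    have "(?X + s M * B ^ M) div B ^ M = s M"
      using X B by (simp add: div_add1_eq[of ?X] div_less)
    then show ?thesis unfolding dig_def using idx eq Suc by simp
  qed
qed

lemma dig_le: "0 < B \<Longrightarrow> dig B a i < B" unfolding dig_def by simp



definition Epi1 :: "ex \<Rightarrow> ex" where
  "Epi1 e = BSum e (IfEq (Mod (lift1 e) (P (Cn 2) (S (V 0)))) Z (Cn 1) Z) e"

lemma sem_Epi1[simp]: "sem (Epi1 e) env = pi1 (sem e env)"
proof -
  have eq: "(\<Sum>i<sem e env. sem (IfEq (Mod (lift1 e) (P (Cn 2) (S (V 0)))) Z (Cn 1) Z) (i # env)) = pi1 (sem e env)"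
    unfolding pi1_def by (intro sum.cong refl) simp
  show ?thesis unfolding Epi1_def
    by (subst sem_BSum) (simp_all only: eq pi1_le)
qed

definition Epi2 :: "ex \<Rightarrow> ex" where
  "Epi2 e = Div (Pred (Div e (P (Cn 2) (Epi1 e)))) (Cn 2)"

lemma sem_Epi2[simp]: "sem (Epi2 e) env = pi2 (sem e env)"
  unfolding Epi2_def pi2_def by simp

lemma rec_funpow: "rec_nat w (\<lambda>y r. f r) i = (f ^^ i) w"
  by (induction i) auto

definition Etl2 :: "ex \<Rightarrow> ex \<Rightarrow> ex" where
  "Etl2 i w = R i w (Epi2 (V 1)) w"

lemma sem_Etl2[simp]: "sem (Etl2 i w) env = tl2 (sem i env) (sem w env)"
  unfolding Etl2_def by (subst sem_R) (auto simp: rec_funpow tl2_def[symmetric] tl2_le)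

definition Eelem :: "ex \<Rightarrow> ex \<Rightarrow> ex" where "Eelem w i = Epi1 (Etl2 i w)"
lemma sem_Eelem[simp]: "sem (Eelem w i) env = elem (sem w env) (sem i env)"
  unfolding Eelem_def elem_def by simp

definition Elen :: "ex \<Rightarrow> ex" where
  "Elen w = BSum w (IfEq (Etl2 (V 0) (lift1 w)) Z Z (Cn 1)) w"

lemma len_le: "len w \<le> w"
proof -
  have "len w \<le> (\<Sum>i<w. 1)" unfolding len_def by (intro sum_mono) simp
  thus ?thesis by simp
qed

lemma sem_Elen[simp]: "sem (Elen w) env = len (sem w env)"
proof -
  have eq: "(\<Sum>i<sem w env. sem (IfEq (Etl2 (V 0) (lift1 w)) Z Z (Cn 1)) (i # env)) = len (sem w env)"
    unfolding len_def by (intro sum.cong refl) simp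
  show ?thesis unfolding Elen_def
    by (subst sem_BSum) (simp_all only: eq len_le)
qed

definition Edig :: "ex \<Rightarrow> ex \<Rightarrow> ex \<Rightarrow> ex" where "Edig b a i = Mod (Div a (P b i)) b"
lemma sem_Edig[simp]: "sem (Edig b a i) env = dig (sem b env) (sem a env) (sem i env)"
  unfolding Edig_def dig_def by simp

definition DSum :: "ex \<Rightarrow> ex \<Rightarrow> ex \<Rightarrow> ex" where
  "DSum n b f = BSum n (Mul (Mod f (lift1 b)) (P (lift1 b) (V 0))) (P b n)"

lemma sem_DSum[simp]: "0 < sem b env \<Longrightarrow>
  sem (DSum n b f) env = (\<Sum>i<sem n env. (sem f (i # env) mod sem b env) * sem b env ^ i)"
  unfolding DSum_def
proof (subst sem_BSum)
  assume b: "0 < sem b env"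
  have "(\<Sum>i<sem n env. (sem f (i # env) mod sem b env) * sem b env ^ i) < sem b env ^ sem n env"
    by (rule sum_digits_less) (use b in simp)
  thus "(\<Sum>i<sem n env. sem (Mul (Mod f (lift1 b)) (P (lift1 b) (V 0))) (i # env)) \<le> sem (P b n) env"
    by simp
qed simp



definition Estep :: "ex \<Rightarrow> ex \<Rightarrow> ex \<Rightarrow> ex \<Rightarrow> ex \<Rightarrow> ex" where
  "Estep T t a D A = (let B = S D; tg = Epi1 t; pl = Epi2 t in
    IfEq tg (Cn 0) Z
    (IfEq tg (Cn 1) (Min D (S (Edig B a Z)))
    (IfEq tg (Cn 2) (Edig B a pl)
    (IfEq tg (Cn 3) (Min D (Mul (Edig B a Z) (Edig B a (Cn 1))))
    (IfEq tg (Cn 4) (Edig B T (Add (Mul (Epi1 pl) A)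
        (DSum (Elen (Epi2 pl)) B (Edig (lift1 B) (lift1 T) (Add (Mul (Eelem (lift1 (Epi2 pl)) (V 0)) (lift1 A)) (lift1 a))))))
    (IfEq tg (Cn 5) (R (Edig B a Z) (Edig B T (Add (Mul (Epi1 pl) A) (Div a B)))
        (Edig (lift2 B) (lift2 T) (Add (Mul (Epi2 (lift2 pl)) (lift2 A))
           (Add (V 0) (Add (Mul (lift2 B) (V 1)) (Mul (Mul (lift2 B) (lift2 B)) (Div (lift2 a) (lift2 B))))))) D)
    Z))))))"

definition step :: "nat \<Rightarrow> nat \<Rightarrow> nat \<Rightarrow> nat \<Rightarrow> nat \<Rightarrow> nat" where
  "step D A T t a = sem (Estep (V 0) (V 1) (V 2) (V 3) (V 4)) [T, t, a, D, A]"

lemma sem_Estep[simp]: "sem (Estep T t a D A) env = step (sem D env) (sem A env) (sem T env) (sem t env) (sem a env)"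
  unfolding step_def Estep_def Let_def by (simp add: sem.simps(5))

definition Enext :: "ex \<Rightarrow> ex \<Rightarrow> ex \<Rightarrow> ex \<Rightarrow> ex" where
  "Enext D A N T = DSum (Mul N A) (S D) (Estep (lift1 T) (Div (V 0) (lift1 A)) (Mod (V 0) (lift1 A)) (lift1 D) (lift1 A))"

definition nextT :: "nat \<Rightarrow> nat \<Rightarrow> nat \<Rightarrow> nat \<Rightarrow> nat" where
  "nextT D A N T = (\<Sum>i<N * A. (step D A T (i div A) (i mod A) mod Suc D) * Suc D ^ i)"

lemma sem_Enext[simp]: "sem (Enext D A N T) env = nextT (sem D env) (sem A env) (sem N env) (sem T env)"
  unfolding Enext_def nextT_def by simp

lemma nextT_less: "nextT D A N T < Suc D ^ (N * A)"
  unfolding nextT_def by (rule sum_digits_less) simp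

definition Etab :: "ex \<Rightarrow> ex \<Rightarrow> ex \<Rightarrow> ex \<Rightarrow> ex" where
  "Etab D A N d = R d Z (Enext (lift2 D) (lift2 A) (lift2 N) (V 1)) (P (S D) (Mul N A))"

definition tab :: "nat \<Rightarrow> nat \<Rightarrow> nat \<Rightarrow> nat \<Rightarrow> nat" where
  "tab D A N d = (nextT D A N ^^ d) 0"

lemma sem_Etab[simp]: "sem (Etab D A N d) env = tab (sem D env) (sem A env) (sem N env) (sem d env)"
proof -
  have "rec_nat 0 (\<lambda>y r. nextT (sem D env) (sem A env) (sem N env) r) y \<le> Suc (sem D env) ^ (sem N env * sem A env)" for y
    by (cases y) (auto intro: less_imp_le nextT_less)
  thus ?thesis unfolding Etab_def tab_def by (subst sem_R) (auto simp: rec_funpow)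
qed



lemma step_cases:
  fixes D A T t a :: nat
  defines "B \<equiv> Suc D"
  shows "pi1 t = 0 \<Longrightarrow> step D A T t a = 0"
    and "pi1 t = 1 \<Longrightarrow> step D A T t a = min D (Suc (dig B a 0))"
    and "pi1 t = 2 \<Longrightarrow> step D A T t a = dig B a (pi2 t)"
    and "pi1 t = 3 \<Longrightarrow> step D A T t a = min D (dig B a 0 * dig B a 1)"
    and "pi1 t = 4 \<Longrightarrow> step D A T t a = dig B T (pi1 (pi2 t) * A +
           (\<Sum>i<len (pi2 (pi2 t)). (dig B T (elem (pi2 (pi2 t)) i * A + a) mod B) * B ^ i))"
    and "pi1 t = 5 \<Longrightarrow> step D A T t a = rec_nat (min D (dig B T (pi1 (pi2 t) * A + a div B)))
           (\<lambda>y r. min D (dig B T (pi2 (pi2 t) * A + (y + (B * r + B * B * (a div B)))))) (dig B a 0)"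
  unfolding step_def Estep_def Let_def B_def by (simp_all add: sem.simps(5))

datatype tm = TZ | TS | TP nat | TM | TC tm "tm list" | TR tm tm

fun tcode :: "tm \<Rightarrow> nat" where
  "tcode TZ = pair 0 0"
| "tcode TS = pair 1 0"
| "tcode (TP i) = pair 2 i"
| "tcode TM = pair 3 0"
| "tcode (TC h gs) = pair 4 (pair (tcode h) (lcode (map tcode gs)))"
| "tcode (TR g h) = pair 5 (pair (tcode g) (tcode h))"

fun csem :: "nat \<Rightarrow> tm \<Rightarrow> nat list \<Rightarrow> nat" where
  "csem D TZ xs = 0"
| "csem D TS xs = min D (Suc (nth0 xs 0))"
| "csem D (TP i) xs = nth0 xs i"
| "csem D TM xs = min D (nth0 xs 0 * nth0 xs 1)"
| "csem D (TC h gs) xs = csem D h (map (\<lambda>g. csem D g xs) gs)"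
| "csem D (TR g h) xs = rec_nat (csem D g (tl xs)) (\<lambda>y r. csem D h (y # r # tl xs)) (nth0 xs 0)"

fun tsem :: "tm \<Rightarrow> nat list \<Rightarrow> nat" where
  "tsem TZ xs = 0"
| "tsem TS xs = Suc (nth0 xs 0)"
| "tsem (TP i) xs = nth0 xs i"
| "tsem TM xs = nth0 xs 0 * nth0 xs 1"
| "tsem (TC h gs) xs = tsem h (map (\<lambda>g. tsem g xs) gs)"
| "tsem (TR g h) xs = rec_nat (tsem g (tl xs)) (\<lambda>y r. tsem h (y # r # tl xs)) (nth0 xs 0)"

fun okK :: "nat \<Rightarrow> nat \<Rightarrow> tm \<Rightarrow> bool" where
  "okK K k (TC h gs) = (k \<le> K \<and> okK K (length gs) h \<and> (\<forall>g\<in>set gs. okK K k g))"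
| "okK K k (TR g h) = (k \<le> K \<and> okK K (k - 1) g \<and> okK K (k - 1 + 2) h)"
| "okK K k t = (k \<le> K)"

lemma okK_le: "okK K k t \<Longrightarrow> k \<le> K"
  by (cases t) auto

lemma okK_mono: "okK K k t \<Longrightarrow> K \<le> K' \<Longrightarrow> okK K' k t"
  by (induction K k t rule: okK.induct) auto

definition mxl :: "nat list \<Rightarrow> nat" where "mxl xs = foldr max xs 0"

lemma mxl_ge: "x \<in> set xs \<Longrightarrow> x \<le> mxl xs"
  unfolding mxl_def by (induction xs) auto

fun height :: "tm \<Rightarrow> nat" where
  "height (TC h gs) = Suc (max (height h) (mxl (map height gs)))"
| "height (TR g h) = Suc (max (height g) (height h))"
| "height t = 1"

lemma height_pos: "0 < height t" by (cases t) auto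

lemma tcode_lt_TC:
  shows "tcode h < tcode (TC h gs)" and "g \<in> set gs \<Longrightarrow> tcode g < tcode (TC h gs)"
proof -
  have a: "pair (tcode h) (lcode (map tcode gs)) < tcode (TC h gs)" using pair_gt2 by simp
  show "tcode h < tcode (TC h gs)" using a pair_gt1[of "tcode h" "lcode (map tcode gs)"] by linarith
  assume "g \<in> set gs"
  then obtain i where i: "i < length gs" "gs ! i = g" by (auto simp: in_set_conv_nth)
  have "tcode g < lcode (map tcode gs)" using lcode_nth_less[of i "map tcode gs"] i by simp
  thus "tcode g < tcode (TC h gs)" using a pair_gt2[of "lcode (map tcode gs)" "tcode h"] by linarith
qed

lemma tcode_lt_TR: "tcode g < tcode (TR g h)" "tcode h < tcode (TR g h)"
proof -
  have a: "pair (tcode g) (tcode h) < tcode (TR g h)" using pair_gt2 by simp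
  show "tcode g < tcode (TR g h)" using a pair_gt1[of "tcode g" "tcode h"] by linarith
  show "tcode h < tcode (TR g h)" using a pair_gt2[of "tcode h" "tcode g"] by linarith
qed

lemma nth0_le: "\<forall>x\<in>set xs. x \<le> D \<Longrightarrow> nth0 xs i \<le> D"
  unfolding nth0_def by auto

lemma rec_eq_bounded:
  assumes "f0 = g0" "g0 \<le> D" "\<forall>y<x. \<forall>r\<le>D. F y r = G y r \<and> G y r \<le> (D::nat)"
  shows "rec_nat f0 F x = rec_nat g0 G x \<and> rec_nat g0 G x \<le> D"
  using assms by (induction x) auto

lemma csem_le: "\<forall>x\<in>set xs. x \<le> D \<Longrightarrow> csem D t xs \<le> D"
proof (induction t arbitrary: xs)
  case (TP i) then show ?case by (simp add: nth0_le)
next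
  case (TC h gs)
  have "\<forall>x\<in>set (map (\<lambda>g. csem D g xs) gs). x \<le> D" using TC by auto
  then show ?case using TC by simp
next
  case (TR g h)
  have tl: "\<forall>x\<in>set (tl xs). x \<le> D" using TR.prems by (cases xs) auto
  have x: "nth0 xs 0 \<le> D" using TR.prems by (rule nth0_le)
  have "rec_nat (csem D g (tl xs)) (\<lambda>y r. csem D h (y # r # tl xs)) (nth0 xs 0)
      = rec_nat (csem D g (tl xs)) (\<lambda>y r. csem D h (y # r # tl xs)) (nth0 xs 0) \<and>
     rec_nat (csem D g (tl xs)) (\<lambda>y r. csem D h (y # r # tl xs)) (nth0 xs 0) \<le> D"
  proof (rule rec_eq_bounded)
    show "csem D g (tl xs) \<le> D" using TR.IH(1) tl by blast
    show "\<forall>y<nth0 xs 0. \<forall>r\<le>D. csem D h (y # r # tl xs) = csem D h (y # r # tl xs) \<and> csem D h (y # r # tl xs) \<le> D"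
      using TR.IH(2) tl x by auto
  qed simp
  then show ?case by simp
qed auto

lemma dig_nextT:
  assumes "i < N * A"
  shows "dig (Suc D) (nextT D A N T) i = step D A T (i div A) (i mod A) mod Suc D"
  unfolding nextT_def by (rule dig_sum) (use assms in auto)

lemma idx_bounds:
  fixes c N a A :: nat
  assumes "c < N" "a < A"
  shows "c * A + a < N * A" "(c * A + a) div A = c" "(c * A + a) mod A = a"
proof -
  have "c * A + a < c * A + A" using assms(2) by (rule add_strict_left_mono)
  also have "\<dots> = Suc c * A" by simp
  also have "\<dots> \<le> N * A" using assms by (intro mult_le_mono1) simp
  finally show "c * A + a < N * A" .
  show "(c * A + a) div A = c" "(c * A + a) mod A = a" using assms by auto
qed



lemma height_TC: "g \<in> set gs \<Longrightarrow> height g < height (TC h gs)"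
  using mxl_ge[of "height g" "map height gs"] by auto

lemma tab_correct:
  fixes D K N :: nat
  defines "B \<equiv> Suc D" and "A \<equiv> Suc D ^ K"
  shows "\<forall>t xs. height t \<le> d \<longrightarrow> tcode t < N \<longrightarrow> okK K (length xs) t \<longrightarrow> (\<forall>x\<in>set xs. x \<le> D) \<longrightarrow>
     dig B (tab D A N d) (tcode t * A + acode B xs) = csem D t xs"
proof (induction d)
  case 0
  then show ?case using height_pos by (metis le_zero_eq less_not_refl)
next
  case (Suc d)
  let ?T = "tab D A N d"
  have Bpos: "0 < B" unfolding B_def by simp
  have ac: "acode B ys < A" if "okK K (length ys) t" "\<forall>x\<in>set ys. x \<le> D" for ys t
  proof -
    have "acode B ys < B ^ length ys" using that(2) by (intro acode_less) (auto simp: B_def)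
    also have "\<dots> \<le> B ^ K" using okK_le[OF that(1)] Bpos by (intro power_increasing) auto
    finally show ?thesis unfolding A_def B_def .
  qed
  show ?case
  proof (intro allI impI)
    fix t xs assume ht: "height t \<le> Suc d" and ct: "tcode t < N" and ok: "okK K (length xs) t"
      and xs: "\<forall>x\<in>set xs. x \<le> D"
    have xsB: "\<forall>x\<in>set xs. x < B" using xs unfolding B_def by auto
    have aA: "acode B xs < A" by (rule ac[OF ok xs])
    have tabS: "tab D A N (Suc d) = nextT D A N ?T" by (simp add: tab_def)
    have d1: "dig B (tab D A N (Suc d)) (tcode t * A + acode B xs) = step D A ?T (tcode t) (acode B xs) mod B"
      unfolding tabS using dig_nextT[OF idx_bounds(1)[OF ct aA], of D ?T] idx_bounds(2,3)[OF ct aA] by (simp add: B_def)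
    have IH: "dig B ?T (tcode s * A + acode B ys) = csem D s ys"
      if "height s \<le> d" "tcode s < N" "okK K (length ys) s" "\<forall>x\<in>set ys. x \<le> D" for s ys
      using Suc.IH that by blast
    have st: "step D A ?T (tcode t) (acode B xs) = csem D t xs"
    proof (cases t)
      case TZ then show ?thesis by (simp add: step_cases)
    next
      case TS then show ?thesis using dig_acode[OF xsB, of 0] by (simp add: step_cases B_def)
    next
      case (TP i) then show ?thesis using dig_acode[OF xsB, of i] by (simp add: step_cases B_def)
    next
      case TM then show ?thesis using dig_acode[OF xsB, of 0] dig_acode[OF xsB, of 1]
        by (simp add: step_cases B_def)
    next
      case (TC h gs)
      let ?ys = "map (\<lambda>g. csem D g xs) gs"
      have ysD: "\<forall>x\<in>set ?ys. x \<le> D" using csem_le[OF xs] by auto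
      have okh: "okK K (length ?ys) h" using ok TC by simp
      have sum: "(\<Sum>i<len (lcode (map tcode gs)). (dig B ?T (elem (lcode (map tcode gs)) i * A + acode B xs) mod B) * B ^ i)
          = acode B ?ys"
      proof -
        have "(\<Sum>i<len (lcode (map tcode gs)). (dig B ?T (elem (lcode (map tcode gs)) i * A + acode B xs) mod B) * B ^ i)
            = (\<Sum>i<length gs. ?ys ! i * B ^ i)"
        proof (unfold len_lcode length_map, intro sum.cong refl)
          fix i assume "i \<in> {..<length gs}"
          hence i: "i < length gs" by simp
          have g: "gs ! i \<in> set gs" using i by simp
          have "dig B ?T (tcode (gs ! i) * A + acode B xs) = csem D (gs ! i) xs"
          proof (rule IH)
            show "height (gs ! i) \<le> d" using height_TC[OF g, of h] ht TC by (simp add: less_Suc_eq_le max_def split: if_splits)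
            show "tcode (gs ! i) < N" using tcode_lt_TC(2)[OF g, of h] ct TC by simp
            show "okK K (length xs) (gs ! i)" using ok TC g by simp
          qed (rule xs)
          moreover have "csem D (gs ! i) xs < B" using csem_le[OF xs] unfolding B_def by (simp add: le_imp_less_Suc)
          ultimately show "(dig B ?T (elem (lcode (map tcode gs)) i * A + acode B xs) mod B) * B ^ i = ?ys ! i * B ^ i"
            using i by (simp add: elem_lcode)
        qed
        also have "\<dots> = acode B ?ys" by (simp add: acode_sum)
        finally show ?thesis .
      qed
      have "dig B ?T (tcode h * A + acode B ?ys) = csem D h ?ys"
      proof (rule IH)
        show "height h \<le> d" using ht TC by simp
        show "tcode h < N" using tcode_lt_TC(1)[of h gs] ct TC by simp
      qed (use okh ysD in auto)
      then show ?thesis using TC sum by (simp add: step_cases B_def)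
    next
      case (TR g h)
      have x: "dig B (acode B xs) 0 = nth0 xs 0" by (rule dig_acode[OF xsB])
      have xD: "nth0 xs 0 \<le> D" by (rule nth0_le[OF xs])
      have adiv: "acode B xs div B = acode B (tl xs)" by (rule acode_div[OF xsB])
      have tlD: "\<forall>x\<in>set (tl xs). x \<le> D" using xs by (cases xs) auto
      have g0: "min D (dig B ?T (tcode g * A + acode B (tl xs))) = csem D g (tl xs)"
      proof -
        have "dig B ?T (tcode g * A + acode B (tl xs)) = csem D g (tl xs)"
        proof (rule IH)
          show "height g \<le> d" using ht TR by simp
          show "tcode g < N" using tcode_lt_TR(1)[of g h] ct TR by simp
          show "okK K (length (tl xs)) g" using ok TR by simp
        qed (rule tlD)
        thus ?thesis using csem_le[OF tlD, of g] by simp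
      qed
      have hstep: "min D (dig B ?T (tcode h * A + (y + (B * r + B * B * acode B (tl xs))))) = csem D h (y # r # tl xs)
          \<and> csem D h (y # r # tl xs) \<le> D"
        if y: "y < nth0 xs 0" and r: "r \<le> D" for y r
      proof -
        have yrD: "\<forall>x\<in>set (y # r # tl xs). x \<le> D" using y xD r tlD by auto
        have e: "y + (B * r + B * B * acode B (tl xs)) = acode B (y # r # tl xs)" by (simp add: algebra_simps)
        have "dig B ?T (tcode h * A + acode B (y # r # tl xs)) = csem D h (y # r # tl xs)"
        proof (rule IH)
          show "height h \<le> d" using ht TR by simp
          show "tcode h < N" using tcode_lt_TR(2)[of h g] ct TR by simp
          show "okK K (length (y # r # tl xs)) h" using ok TR by simp
        qed (rule yrD)
        thus ?thesis using e csem_le[OF yrD, of h] by simp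
      qed
      have "rec_nat (min D (dig B ?T (tcode g * A + acode B (tl xs))))
             (\<lambda>y r. min D (dig B ?T (tcode h * A + (y + (B * r + B * B * acode B (tl xs)))))) (nth0 xs 0)
          = rec_nat (csem D g (tl xs)) (\<lambda>y r. csem D h (y # r # tl xs)) (nth0 xs 0) \<and>
          rec_nat (csem D g (tl xs)) (\<lambda>y r. csem D h (y # r # tl xs)) (nth0 xs 0) \<le> D"
        by (rule rec_eq_bounded) (use g0 csem_le[OF tlD, of g] hstep in auto)
      then show ?thesis using TR x adiv by (simp add: step_cases B_def)
    qed
    have "csem D t xs < B" using csem_le[OF xs] unfolding B_def by (simp add: le_imp_less_Suc)
    thus "dig B (tab D A N (Suc d)) (tcode t * A + acode B xs) = csem D t xs" using d1 st by simp
  qed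
qed



lemma mxl_Cons[simp]: "mxl (x # xs) = max x (mxl xs)" by (simp add: mxl_def)
lemma mxl_Nil[simp]: "mxl [] = 0" by (simp add: mxl_def)

lemma mxl_le: "\<forall>x\<in>set xs. x \<le> b \<Longrightarrow> mxl xs \<le> (b::nat)"
  by (induction xs) auto

lemma mxl_tl: "mxl (tl xs) \<le> mxl xs" by (cases xs) auto

lemma nth0_mxl: "nth0 xs i \<le> mxl xs"
  unfolding nth0_def by (auto intro: mxl_ge)

lemma pw_mono: "c \<le> c' \<Longrightarrow> (m + 2) ^ c \<le> ((m::nat) + 2) ^ c'"
  by (rule power_increasing) auto

lemma pw_ge: "1 \<le> c \<Longrightarrow> m + 2 \<le> ((m::nat) + 2) ^ c"
  using pw_mono[of 1 c m] by simp

lemma pw_plus2: "1 \<le> c \<Longrightarrow> (m + 2) ^ c + 2 \<le> ((m::nat) + 2) ^ (c + 1)"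
proof -
  assume c: "1 \<le> c"
  let ?a = "(m + 2) ^ c"
  have a2: "2 \<le> ?a" using pw_ge[OF c, of m] by simp
  have "?a + 2 \<le> 2 * ?a" using a2 by simp
  also have "\<dots> \<le> (m + 2) * ?a" by (intro mult_le_mono1) simp
  finally show ?thesis by simp
qed

lemma pw_nest: "1 \<le> c \<Longrightarrow> b \<le> (m + 2) ^ c \<Longrightarrow> (b + 2) ^ e \<le> ((m::nat) + 2) ^ ((c + 1) * e)"
proof -
  assume c: "1 \<le> c" and b: "b \<le> (m + 2) ^ c"
  have "(b + 2) ^ e \<le> ((m + 2) ^ (c + 1)) ^ e"
    using pw_plus2[OF c, of m] b by (intro power_mono) auto
  also have "\<dots> = (m + 2) ^ ((c + 1) * e)" by (rule power_mult[symmetric])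
  finally show ?thesis .
qed

lemma rec_eq_upto:
  assumes "f0 = g0" "\<forall>y<x. F y (rec_nat g0 G y) = G y (rec_nat g0 G y)"
  shows "rec_nat f0 F x = rec_nat g0 G x"
proof -
  have "\<forall>y\<le>x. rec_nat f0 F y = rec_nat g0 G y"
  proof (intro allI impI)
    fix y assume "y \<le> x" thus "rec_nat f0 F y = rec_nat g0 G y"
      using assms by (induction y) auto
  qed
  thus ?thesis by simp
qed

definition good :: "nat \<Rightarrow> (nat list \<Rightarrow> nat) \<Rightarrow> tm \<Rightarrow> nat \<Rightarrow> bool" where
  "good k F t c \<longleftrightarrow> 1 \<le> c \<and> (\<forall>xs. length xs = k \<longrightarrow> F xs = tsem t xs \<and> tsem t xs \<le> (mxl xs + 2) ^ c \<and>
      (\<forall>D. (mxl xs + 2) ^ c \<le> D \<longrightarrow> csem D t xs = tsem t xs))"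

lemma good_mono: "good k F t c \<Longrightarrow> c \<le> c' \<Longrightarrow> good k F t c'"
proof -
  assume g: "good k F t c" and cc: "c \<le> c'"
  have p: "(mxl xs + 2) ^ c \<le> (mxl xs + 2) ^ c'" for xs by (rule pw_mono[OF cc])
  show ?thesis unfolding good_def
  proof (intro conjI allI impI)
    show "1 \<le> c'" using g cc unfolding good_def by simp
    fix xs :: "nat list" assume l: "length xs = k"
    show "F xs = tsem t xs" using g l unfolding good_def by simp
    have "tsem t xs \<le> (mxl xs + 2) ^ c" using g l unfolding good_def by simp
    thus "tsem t xs \<le> (mxl xs + 2) ^ c'" using p[of xs] by linarith
    fix D assume dD: "(mxl xs + 2) ^ c' \<le> D"
    have h: "\<forall>D. (mxl xs + 2) ^ c \<le> D \<longrightarrow> csem D t xs = tsem t xs" using g l unfolding good_def by blast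
    have "(mxl xs + 2) ^ c \<le> D" using p[of xs] dD by linarith
    thus "csem D t xs = tsem t xs" using h by blast
  qed
qed

lemma grz_f2: "grz_f 2 x y = x * y" by (simp add: numeral_2_eq_2)



lemma good_comp:
  assumes gh: "good m H th ch" and gi: "\<forall>i<m. good k (gs i) (T i) (C i)"
  defines "cg \<equiv> 1 + (\<Sum>i<m. C i)"
  shows "good k (\<lambda>xs. H (map (\<lambda>i. gs i xs) [0..<m])) (TC th (map T [0..<m])) ((cg + 1) * (ch + 1))"
  unfolding good_def
proof (intro conjI allI impI)
  let ?c = "(cg + 1) * (ch + 1)"
  have ch1: "1 \<le> ch" using gh unfolding good_def by simp
  show "1 \<le> ?c" by simp
  fix xs :: "nat list" assume l: "length xs = k"
  let ?m = "mxl xs"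
  let ?ys = "map (\<lambda>i. gs i xs) [0..<m]"
  have Ci: "C i \<le> cg" if "i < m" for i
  proof -
    have "C i \<le> (\<Sum>i<m. C i)" using that by (intro member_le_sum) auto
    thus ?thesis unfolding cg_def by simp
  qed
  have gi': "gs i xs = tsem (T i) xs \<and> tsem (T i) xs \<le> (?m + 2) ^ C i \<and>
      (\<forall>D. (?m + 2) ^ C i \<le> D \<longrightarrow> csem D (T i) xs = tsem (T i) xs)" if "i < m" for i
    using gi that l unfolding good_def by blast
  have ys_eq: "?ys = map (\<lambda>g. tsem g xs) (map T [0..<m])" using gi' by simp
  have ys_le: "mxl ?ys \<le> (?m + 2) ^ cg"
  proof (rule mxl_le, intro ballI)
    fix y assume "y \<in> set ?ys"
    then obtain i where i: "i < m" "y = gs i xs" by auto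
    have "y \<le> (?m + 2) ^ C i" using gi'[OF i(1)] i by simp
    also have "\<dots> \<le> (?m + 2) ^ cg" using Ci[OF i(1)] by (rule pw_mono)
    finally show "y \<le> (?m + 2) ^ cg" .
  qed
  have cg1: "1 \<le> cg" unfolding cg_def by simp
  have hb: "(mxl ?ys + 2) ^ ch \<le> (?m + 2) ^ ?c"
  proof -
    have "(mxl ?ys + 2) ^ ch \<le> (?m + 2) ^ ((cg + 1) * ch)" by (rule pw_nest[OF cg1 ys_le])
    also have "\<dots> \<le> (?m + 2) ^ ?c" by (rule pw_mono) simp
    finally show ?thesis .
  qed
  have lys: "length ?ys = m" by simp
  have gh': "H ?ys = tsem th ?ys \<and> tsem th ?ys \<le> (mxl ?ys + 2) ^ ch \<and>
      (\<forall>D. (mxl ?ys + 2) ^ ch \<le> D \<longrightarrow> csem D th ?ys = tsem th ?ys)"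
    using gh lys unfolding good_def by blast
  have tc: "tsem (TC th (map T [0..<m])) xs = tsem th ?ys" unfolding ys_eq by simp
  show "H ?ys = tsem (TC th (map T [0..<m])) xs" unfolding tc using gh' by blast
  show "tsem (TC th (map T [0..<m])) xs \<le> (?m + 2) ^ ?c" unfolding tc using gh' hb le_trans by blast
  fix D assume D: "(?m + 2) ^ ?c \<le> D"
  have cs: "map (\<lambda>g. csem D g xs) (map T [0..<m]) = ?ys"
  proof -
    have "csem D (T i) xs = gs i xs" if i: "i < m" for i
    proof -
      have "(?m + 2) ^ C i \<le> (?m + 2) ^ ?c"
        using Ci[OF i] by (intro pw_mono) (simp add: trans_le_add1)
      thus ?thesis using gi'[OF i] D by simp
    qed
    thus ?thesis by simp
  qed
  have "csem D (TC th (map T [0..<m])) xs = csem D th ?ys" unfolding csem.simps cs ..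
  also have "\<dots> = tsem th ?ys" using gh' hb D le_trans by blast
  finally show "csem D (TC th (map T [0..<m])) xs = tsem (TC th (map T [0..<m])) xs" unfolding tc .
qed

lemma goodD:
  assumes "good k F t c" "length xs = k"
  shows "F xs = tsem t xs" "tsem t xs \<le> (mxl xs + 2) ^ c"
    "(mxl xs + 2) ^ c \<le> D \<Longrightarrow> csem D t xs = tsem t xs" "1 \<le> c"
  using assms unfolding good_def by blast+

lemma good_rec:
  assumes gg: "good k G tg cg" and gh: "good (k + 2) Hh th ch" and gj: "good (k + 1) J tj cj"
    and bd: "\<forall>x xs. length xs = k \<longrightarrow> rec_nat (G xs) (\<lambda>y r. Hh (y # r # xs)) x \<le> J (x # xs)"
  shows "good (k + 1) (\<lambda>ys. rec_nat (G (tl ys)) (\<lambda>y r. Hh (y # r # tl ys)) (hd ys)) (TR tg th)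
     ((cj + 1) * (ch + 1) + cg)"
  unfolding good_def
proof (intro conjI allI impI)
  let ?c = "(cj + 1) * (ch + 1) + cg"
  from gj have cj1: "1 \<le> cj" unfolding good_def by (rule conjunct1)
  show "1 \<le> ?c" by simp
  fix ys :: "nat list" assume l: "length ys = k + 1"
  then obtain x zs where ys: "ys = x # zs" and lz: "length zs = k" by (cases ys) auto
  let ?m = "mxl ys"
  define Rv where "Rv y = rec_nat (G zs) (\<lambda>y r. Hh (y # r # zs)) y" for y
  have Geq: "G zs = tsem tg zs" using goodD(1)[OF gg lz] .
  have Heq: "Hh (y # r # zs) = tsem th (y # r # zs)" for y r
    using goodD(1)[OF gh, of "y # r # zs"] lz by simp
  have ts: "tsem (TR tg th) ys = Rv x"
    unfolding Rv_def ys by (simp add: nth0_def Geq Heq)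
  have lhs: "rec_nat (G (tl ys)) (\<lambda>y r. Hh (y # r # tl ys)) (hd ys) = Rv x"
    unfolding Rv_def ys by simp
  have Rvb: "Rv y \<le> (?m + 2) ^ cj" if "y \<le> x" for y
  proof -
    have "Rv y \<le> J (y # zs)" unfolding Rv_def using bd lz by simp
    also have "\<dots> \<le> (mxl (y # zs) + 2) ^ cj"
    proof -
      have "length (y # zs) = k + 1" using lz by simp
      from goodD(1,2)[OF gj this] show ?thesis by simp
    qed
    also have "\<dots> \<le> (?m + 2) ^ cj" using that unfolding ys by (intro power_mono) auto
    finally show ?thesis .
  qed
  show "rec_nat (G (tl ys)) (\<lambda>y r. Hh (y # r # tl ys)) (hd ys) = tsem (TR tg th) ys"
    using lhs ts by simp
  have "(?m + 2) ^ cj \<le> (?m + 2) ^ ?c" by (rule pw_mono) simp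
  thus "tsem (TR tg th) ys \<le> (?m + 2) ^ ?c" using ts Rvb[of x] by simp
  fix D assume D: "(?m + 2) ^ ?c \<le> D"
  have mz: "mxl zs \<le> ?m" unfolding ys by simp
  have g0: "csem D tg zs = G zs"
  proof -
    have "(mxl zs + 2) ^ cg \<le> (?m + 2) ^ cg" using mz by (intro power_mono) auto
    also have "\<dots> \<le> (?m + 2) ^ ?c" by (rule pw_mono) simp
    finally have "(mxl zs + 2) ^ cg \<le> D" using D by linarith
    thus ?thesis using goodD(1,3)[OF gg lz] by simp
  qed
  have hs: "csem D th (y # Rv y # zs) = Hh (y # Rv y # zs)" if y: "y < x" for y
  proof -
    have mx: "x \<le> ?m" unfolding ys by simp
    have b1: "mxl (y # Rv y # zs) \<le> (?m + 2) ^ cj"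
    proof -
      have "?m + 2 \<le> (?m + 2) ^ cj" by (rule pw_ge[OF cj1])
      moreover have "Rv y \<le> (?m + 2) ^ cj" using y by (intro Rvb) simp
      ultimately show ?thesis using y mx mz by auto
    qed
    have "(mxl (y # Rv y # zs) + 2) ^ ch \<le> (?m + 2) ^ ((cj + 1) * ch)" by (rule pw_nest[OF cj1 b1])
    also have "\<dots> \<le> (?m + 2) ^ ?c" by (rule pw_mono) simp
    finally have "(mxl (y # Rv y # zs) + 2) ^ ch \<le> D" using D by linarith
    moreover have "length (y # Rv y # zs) = k + 2" using lz by simp
    ultimately show ?thesis using goodD(1,3)[OF gh] by simp
  qed
  have "csem D (TR tg th) ys = rec_nat (csem D tg zs) (\<lambda>y r. csem D th (y # r # zs)) x"
    unfolding ys by (simp add: nth0_def)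
  also have "\<dots> = Rv x" unfolding Rv_def
    by (rule rec_eq_upto) (use g0 hs in \<open>simp_all add: Rv_def\<close>)
  finally show "csem D (TR tg th) ys = tsem (TR tg th) ys" using ts by simp
qed



lemma good_ext: "good k F t c \<Longrightarrow> (\<forall>xs. length xs = k \<longrightarrow> G xs = F xs) \<Longrightarrow> good k G t c"
  unfolding good_def by simp

lemma grz2_term: "(k, F) \<in> grz 2 \<Longrightarrow> \<exists>t c K0. good k F t c \<and> okK K0 k t"
proof (induction rule: grz.induct)
  case zero
  have "good 1 (\<lambda>xs. 0) TZ 1" unfolding good_def by simp
  then show ?case by (intro exI[of _ TZ] exI[of _ 1] exI[of _ 1]) simp
next
  case succ
  have "good 1 (\<lambda>xs. xs ! 0 + 1) TS 1" unfolding good_def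
  proof (intro conjI allI impI)
    fix xs :: "nat list" assume l: "length xs = 1"
    have n: "nth0 xs 0 = xs ! 0" using l by (simp add: nth0_def)
    have m: "xs ! 0 \<le> mxl xs" using nth0_mxl[of xs 0] n by simp
    show "xs ! 0 + 1 = tsem TS xs" using n by simp
    show "tsem TS xs \<le> (mxl xs + 2) ^ 1" using n m by simp
    fix D assume "(mxl xs + 2) ^ 1 \<le> D"
    thus "csem D TS xs = tsem TS xs" using n m by simp
  qed simp
  then show ?case by (intro exI[of _ TS] exI[of _ 1] exI[of _ 1]) simp
next
  case (proj i k)
  have "good k (\<lambda>xs. xs ! i) (TP i) 1" unfolding good_def
  proof (intro conjI allI impI)
    fix xs :: "nat list" assume l: "length xs = k"
    have n: "nth0 xs i = xs ! i" using l proj by (simp add: nth0_def)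
    have m: "xs ! i \<le> mxl xs" using nth0_mxl[of xs i] n by simp
    show "xs ! i = tsem (TP i) xs" using n by simp
    show "tsem (TP i) xs \<le> (mxl xs + 2) ^ 1" using n m by simp
    fix D assume "(mxl xs + 2) ^ 1 \<le> D"
    thus "csem D (TP i) xs = tsem (TP i) xs" by simp
  qed simp
  then show ?case by (intro exI[of _ "TP i"] exI[of _ 1] exI[of _ k]) simp
next
  case fn
  have "good 2 (\<lambda>xs. grz_f 2 (xs ! 0) (xs ! 1)) TM 2" unfolding good_def
  proof (intro conjI allI impI)
    fix xs :: "nat list" assume l: "length xs = 2"
    have n: "nth0 xs 0 = xs ! 0" "nth0 xs 1 = xs ! 1" using l by (auto simp: nth0_def)
    have m: "xs ! 0 \<le> mxl xs" "xs ! 1 \<le> mxl xs" using nth0_mxl[of xs 0] nth0_mxl[of xs 1] n by auto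
    show "grz_f 2 (xs ! 0) (xs ! 1) = tsem TM xs" using n by (simp add: grz_f2)
    have "xs ! 0 * xs ! 1 \<le> (mxl xs + 2) * (mxl xs + 2)" using m by (intro mult_le_mono) auto
    hence b: "tsem TM xs \<le> (mxl xs + 2) ^ 2" using n by (simp add: power2_eq_square)
    show "tsem TM xs \<le> (mxl xs + 2) ^ 2" by (rule b)
    fix D assume "(mxl xs + 2) ^ 2 \<le> D"
    thus "csem D TM xs = tsem TM xs" using b by simp
  qed simp
  then show ?case by (intro exI[of _ TM] exI[of _ 2] exI[of _ 2]) simp
next
  case (comp m h k gs)
  obtain th ch Kh where h: "good m h th ch" "okK Kh m th" using comp.IH by blast
  have "\<forall>i. \<exists>p. i < m \<longrightarrow> good k (gs i) (fst p) (fst (snd p)) \<and> okK (snd (snd p)) k (fst p)"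
    using comp.IH(2) by fastforce
  then obtain f where f: "\<forall>i<m. good k (gs i) (fst (f i)) (fst (snd (f i))) \<and> okK (snd (snd (f i))) k (fst (f i))"
    by metis
  define T where "T i = fst (f i)" for i
  define C where "C i = fst (snd (f i))" for i
  define KK where "KK i = snd (snd (f i))" for i
  have gi: "\<forall>i<m. good k (gs i) (T i) (C i)" using f unfolding T_def C_def by blast
  let ?K0 = "k + m + Kh + (\<Sum>i<m. KK i)"
  have ok: "okK ?K0 k (TC th (map T [0..<m]))"
  proof -
    have "okK ?K0 m th" using h(2) by (rule okK_mono) simp
    moreover have "okK ?K0 k (T i)" if "i < m" for i
    proof -
      have "KK i \<le> (\<Sum>i<m. KK i)" using that by (intro member_le_sum) auto
      moreover have "okK (KK i) k (T i)" using f that unfolding T_def KK_def by blast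
      ultimately show ?thesis using okK_mono[of "KK i" k "T i" ?K0] by simp
    qed
    ultimately show ?thesis by auto
  qed
  show ?case using good_comp[OF h(1) gi] ok by blast
next
  case (bprec k g h j)
  obtain tg cg Kg where g: "good k g tg cg" "okK Kg k tg" using bprec.IH by blast
  obtain th ch Kh where hh: "good (k + 2) h th ch" "okK Kh (k + 2) th" using bprec.IH by blast
  obtain tj cj Kj where jj: "good (k + 1) j tj cj" using bprec.IH by blast
  have ok: "okK (k + 1 + Kg + Kh) (k + 1) (TR tg th)"
    using okK_mono[OF g(2), of "k + 1 + Kg + Kh"] okK_mono[OF hh(2), of "k + 1 + Kg + Kh"] by simp
  show ?case using good_rec[OF g(1) hh(1) jj bprec.hyps(4)] ok by blast
next
  case (ext k f g)
  then show ?case using good_ext by blast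
qed



lemma grz2_sub_grz3: "(k, F) \<in> grz 2 \<Longrightarrow> (k, F) \<in> grz 3"
proof (induction rule: grz.induct)
  case zero show ?case by (rule grz.zero)
next
  case succ show ?case by (rule grz.succ)
next
  case (proj i k) then show ?case by (rule grz.proj)
next
  case fn
  have "(2, \<lambda>xs. sem (Mul (V 0) (V 1)) xs) \<in> grz 3" by (rule grz_sem) simp
  thus ?case by (rule grz_ext') (simp add: grz_f2)
next
  case (comp m h k gs)
  from comp have h3: "(m, h) \<in> grz 3" by blast
  from comp have g3: "\<forall>i<m. (k, gs i) \<in> grz 3" by blast
  show ?case by (rule grz.comp[OF h3 g3])
next
  case (bprec k g h j)
  from bprec have a: "(k, g) \<in> grz 3" "(k + 2, h) \<in> grz 3" "(k + 1, j) \<in> grz 3" by blast+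
  show ?case by (rule grz.bprec[OF a bprec.hyps(4)])
next
  case (ext k f g)
  show ?case by (rule grz.ext[OF ext.IH ext.hyps(2)])
qed

lemma height_le_code: "height t \<le> tcode t"
proof (induction t)
  case (TC h gs)
  have a: "height h < tcode (TC h gs)" using TC.IH(1) tcode_lt_TC(1)[of h gs] by simp
  have b: "mxl (map height gs) < tcode (TC h gs)"
  proof (cases gs)
    case Nil then show ?thesis by (simp add: pair_pos)
  next
    case (Cons g0 gs')
    have "\<forall>x\<in>set (map height gs). x \<le> tcode (TC h gs) - 1"
    proof
      fix x assume "x \<in> set (map height gs)"
      then obtain g where g: "g \<in> set gs" "x = height g" by auto
      thus "x \<le> tcode (TC h gs) - 1" using TC.IH(2)[OF g(1)] tcode_lt_TC(2)[OF g(1), of h] by simp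
    qed
    hence "mxl (map height gs) \<le> tcode (TC h gs) - 1" by (rule mxl_le)
    thus ?thesis using a by linarith
  qed
  show ?case using a b by simp
next
  case (TR g h)
  have a: "height g < tcode (TR g h)" using TR.IH(1) tcode_lt_TR(1) by (rule le_less_trans)
  have b: "height h < tcode (TR g h)" using TR.IH(2) tcode_lt_TR(2) by (rule le_less_trans)
  show ?case using a b by (simp del: tcode.simps)
qed (auto simp: pair_pos Suc_leI)

definition Edd :: "ex \<Rightarrow> ex \<Rightarrow> ex" where
  "Edd I Sx = (let X = P (Cn 4) (Add I (Cn 2)); p = Epi1 I; q = Epi2 I;
     Dd = P (Add X (Cn 2)) q; B = S Dd; A = P B q; T = Etab Dd A I I;
     vf = Edig B T (Add (Mul (Epi1 p) A) X);
     vg = Edig B T (Add (Mul (Epi1 (Epi2 p)) A) X);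
     vh = Edig B T (Add (Mul (Epi2 (Epi2 p)) A) X) in
     IfLt (Mul (Mul (Cn 3) (P (Cn 4) I)) vf)
          (Add (Mul (Add (Mul (Cn 3) Sx) (Cn 1)) (S vh)) (Mul (Mul (Cn 3) (P (Cn 4) I)) vg)) (Cn 2) Z)"

definition ddig :: "nat \<Rightarrow> nat \<Rightarrow> nat" where "ddig i s = sem (Edd (V 0) (V 1)) [i, s]"

lemma sem_Edd[simp]: "sem (Edd I Sx) env = ddig (sem I env) (sem Sx env)"
  unfolding ddig_def Edd_def Let_def by simp

lemma ddig_eq:
  fixes i s :: nat
  defines "x \<equiv> 4 ^ (i + 2)"
  defines "D \<equiv> (x + 2) ^ pi2 i"
  defines "A \<equiv> Suc D ^ pi2 i"
  defines "T \<equiv> tab D A i i"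
  defines "vf \<equiv> dig (Suc D) T (pi1 (pi1 i) * A + x)"
  defines "vg \<equiv> dig (Suc D) T (pi1 (pi2 (pi1 i)) * A + x)"
  defines "vh \<equiv> dig (Suc D) T (pi2 (pi2 (pi1 i)) * A + x)"
  shows "ddig i s = (if 3 * 4 ^ i * vf < (3 * s + 1) * Suc vh + 3 * 4 ^ i * vg then 2 else 0)"
  unfolding ddig_def Edd_def Let_def x_def D_def A_def T_def vf_def vg_def vh_def by simp

lemma if_le2: "(if c then 2 else 0) \<le> (2::nat)" by simp

lemma ddig_le: "ddig i s \<le> 2"
  by (subst ddig_eq) (rule if_le2)

definition Sseq :: "nat \<Rightarrow> nat" where "Sseq n = rec_nat 0 (\<lambda>i s. 4 * s + ddig i s) n"

lemma Sseq_Suc: "Sseq (Suc n) = 4 * Sseq n + ddig n (Sseq n)" by (simp add: Sseq_def)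
lemma Sseq_0: "Sseq 0 = 0" by (simp add: Sseq_def)

lemma Sseq_less: "Sseq n < 4 ^ n"
proof (induction n)
  case 0 then show ?case by (simp add: Sseq_0)
next
  case (Suc n)
  have "Sseq (Suc n) \<le> 4 * Sseq n + 2" using ddig_le[of n "Sseq n"] by (simp add: Sseq_Suc)
  also have "\<dots> < 4 * 4 ^ n" using Suc by simp
  finally show ?case by simp
qed

definition ES :: ex where
  "ES = R (V 0) Z (Add (Mul (Cn 4) (V 1)) (Edd (V 0) (V 1))) (P (Cn 4) (V 0))"

lemma sem_ES: "sem ES [n] = Sseq n"
proof -
  have B: "\<forall>y\<le>n. rec_nat 0 (\<lambda>y r. 4 * r + ddig y r) y \<le> (4::nat) ^ n"
  proof (intro allI impI)
    fix y :: nat assume y: "y \<le> n"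
    have "rec_nat 0 (\<lambda>y r. 4 * r + ddig y r) y = Sseq y" by (simp add: Sseq_def)
    also have "\<dots> < 4 ^ y" by (rule Sseq_less)
    also have "\<dots> \<le> 4 ^ n" using y by (intro power_increasing) auto
    finally show "rec_nat 0 (\<lambda>y r. 4 * r + ddig y r) y \<le> 4 ^ n" by simp
  qed
  have "sem ES [n] = rec_nat 0 (\<lambda>y r. 4 * r + ddig y r) n"
  proof -
    have "sem ES [n] = rec_nat (sem Z [n]) (\<lambda>y r. sem (Add (Mul (Cn 4) (V 1)) (Edd (V 0) (V 1))) (y # r # [n])) (sem (V 0) [n])"
      unfolding ES_def by (rule sem_R) (use B in simp)
    thus ?thesis by simp
  qed
  thus ?thesis by (simp add: Sseq_def)
qed



definition dseq :: "nat \<Rightarrow> nat" where "dseq i = ddig i (Sseq i)"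
definition fa :: "nat \<Rightarrow> real" where "fa i = real (dseq i) / 4 ^ (i + 1)"
definition alpha :: real where "alpha = suminf fa"

lemma fa_nonneg: "0 \<le> fa i" unfolding fa_def by simp

lemma fa_le: "fa i \<le> (1/2) * (1/4) ^ i"
proof -
  have "real (dseq i) \<le> 2" using ddig_le[of i "Sseq i"] unfolding dseq_def by simp
  hence "fa i \<le> 2 / 4 ^ (i + 1)" unfolding fa_def by (intro divide_right_mono) auto
  also have "\<dots> = (1/2) * (1/4) ^ i" by (simp add: power_divide field_simps)
  finally show ?thesis .
qed

lemma geo_summable: "summable (\<lambda>i. c * (1/4::real) ^ i)"
  by (intro summable_mult summable_geometric) simp

lemma fa_summable: "summable fa"
  by (rule summable_comparison_test'[OF geo_summable[of "1/2"], of 0]) (use fa_nonneg fa_le in auto)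

lemma partial_eq: "real (Sseq n) / 4 ^ n = (\<Sum>i<n. fa i)"
proof (induction n)
  case 0 then show ?case by (simp add: Sseq_0)
next
  case (Suc n)
  have "real (Sseq (Suc n)) / 4 ^ Suc n = real (Sseq n) / 4 ^ n + fa n"
    unfolding fa_def dseq_def Sseq_Suc by (simp add: field_simps)
  then show ?case using Suc by simp
qed

lemma alpha_bounds: "(\<Sum>i<n. fa i) \<le> alpha \<and> alpha \<le> (\<Sum>i<n. fa i) + (2/3) / 4 ^ n"
proof -
  have split: "alpha = (\<Sum>i. fa (i + n)) + (\<Sum>i<n. fa i)"
    unfolding alpha_def by (rule suminf_split_initial_segment[OF fa_summable])
  have st: "summable (\<lambda>i. fa (i + n))" using fa_summable by (rule summable_ignore_initial_segment)
  have t0: "0 \<le> (\<Sum>i. fa (i + n))" by (rule suminf_nonneg[OF st]) (rule fa_nonneg)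
  have "(\<Sum>i. fa (i + n)) \<le> (\<Sum>i. ((1/2) * (1/4) ^ n) * (1/4::real) ^ i)"
  proof (rule suminf_le)
    show "fa (i + n) \<le> ((1/2) * (1/4) ^ n) * (1/4) ^ i" for i
      using fa_le[of "i + n"] by (simp add: power_add mult_ac)
  qed (use st geo_summable in auto)
  also have "\<dots> = ((1/2) * (1/4) ^ n) * (1 / (1 - 1/4))"
    by (subst suminf_mult) (simp_all add: suminf_geometric)
  also have "\<dots> = (2/3) / 4 ^ n" by (simp add: power_divide)
  finally show ?thesis using split t0 by simp
qed

lemma Sseq_bounds:
  "real (Sseq n) / 4 ^ n \<le> alpha \<and> alpha \<le> real (Sseq n) / 4 ^ n + (2/3) / 4 ^ n"
  using alpha_bounds[of n] partial_eq[of n] by simp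

lemma four_pow_ge: "real x + 1 \<le> 4 ^ x"
proof (induction x)
  case 0 then show ?case by simp
next
  case (Suc x)
  have "(1::real) \<le> 4 ^ x" by simp
  then show ?case using Suc by simp
qed

lemma alpha_in3: "alpha \<in> grz_reals 3"
  unfolding grz_reals_def grz_computable_def
proof (intro CollectI exI conjI allI)
  show "grz_unary 3 Sseq" unfolding grz_unary_def
  proof (rule grz_ext'[OF grz_sem[of 1 ES]])
    fix xs :: "nat list" assume "length xs = 1"
    then obtain a where "xs = [a]" by (metis One_nat_def length_0_conv length_Suc_conv)
    thus "Sseq (xs ! 0) = sem ES xs" by (simp add: sem_ES)
  qed simp
  show "grz_unary 3 (\<lambda>x. 0)" unfolding grz_unary_def using grz.zero[of 3] by simp
  show "grz_unary 3 (\<lambda>x. 4 ^ x - 1)" unfolding grz_unary_def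
  proof (rule grz_ext'[OF grz_sem[of 1 "Sub (P (Cn 4) (V 0)) (Cn 1)"]])
    fix xs :: "nat list" assume "length xs = 1"
    thus "4 ^ (xs ! 0) - 1 = sem (Sub (P (Cn 4) (V 0)) (Cn 1)) xs" by simp
  qed simp
  fix x :: nat
  have h: "real (4 ^ x - 1 :: nat) + 1 = 4 ^ x"
    by (simp add: of_nat_diff)
  have b: "\<bar>real (Sseq x) / 4 ^ x - alpha\<bar> \<le> (2/3) / 4 ^ x" using Sseq_bounds[of x] by linarith
  have "(2/3) / (4::real) ^ x \<le> 1 / (real x + 1)"
    using four_pow_ge[of x] by (simp add: field_simps)
  thus "\<bar>(real (Sseq x) - real 0) / (real (4 ^ x - 1) + 1) - alpha\<bar> \<le> 1 / (real x + 1)"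
    using b h by simp
qed



lemma dig_val:
  assumes gd: "good 1 (\<lambda>xs. F (xs ! 0)) t c" and ok: "okK K 1 t"
    and cq: "c \<le> q" "K \<le> q" "1 \<le> q" and ct: "tcode t < i"
  shows "dig (Suc ((x + 2) ^ q)) (tab ((x + 2) ^ q) (Suc ((x + 2) ^ q) ^ q) i i)
           (tcode t * Suc ((x + 2) ^ q) ^ q + x) = F x"
proof -
  let ?D = "(x + 2) ^ q"
  have xD: "x \<le> ?D" using pw_ge[OF cq(3), of x] by simp
  have tc: "\<forall>t xs. height t \<le> i \<longrightarrow> tcode t < i \<longrightarrow> okK q (length xs) t \<longrightarrow> (\<forall>x\<in>set xs. x \<le> ?D) \<longrightarrow>
     dig (Suc ?D) (tab ?D (Suc ?D ^ q) i i) (tcode t * Suc ?D ^ q + acode (Suc ?D) xs) = csem ?D t xs"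
    by (rule tab_correct)
  have "dig (Suc ?D) (tab ?D (Suc ?D ^ q) i i) (tcode t * Suc ?D ^ q + acode (Suc ?D) [x]) = csem ?D t [x]"
  proof (rule tc[rule_format])
    show "height t \<le> i" using height_le_code[of t] ct by simp
    show "okK q (length [x]) t" using okK_mono[OF ok cq(2)] by simp
  qed (use ct xD in auto)
  moreover have "acode (Suc ?D) [x] = x" by simp
  moreover have "csem ?D t [x] = F x"
  proof -
    have l: "length [x] = 1" by simp
    have "(mxl [x] + 2) ^ c \<le> ?D" using pw_mono[OF cq(1), of x] by simp
    from goodD(1)[OF gd l] goodD(3)[OF gd l this] show ?thesis by simp
  qed
  ultimately show ?thesis by simp
qed

lemma contra:
  fixes F G H S i d :: nat and al :: real
  assumes d: "d = (if 3 * 4 ^ i * F < (3 * S + 1) * Suc H + 3 * 4 ^ i * G then 2 else 0)"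
    and lo: "real S / 4 ^ i + real d / 4 ^ (i + 1) \<le> al"
    and hi: "al \<le> real S / 4 ^ i + real d / 4 ^ (i + 1) + (2/3) / 4 ^ (i + 1)"
    and ap: "\<bar>(real F - real G) / (real H + 1) - al\<bar> \<le> 1 / (real (4 ^ (i + 2) :: nat) + 1)"
  shows False
proof -
  define E :: real where "E = 4 ^ i"
  have E: "0 < E" unfolding E_def by simp
  define a where "a = (real F - real G) / (real H + 1)"
  have Hp: "0 < real H + 1" by simp
  have x16: "real (4 ^ (i + 2) :: nat) = 16 * E" unfolding E_def by (simp add: power_add)
  have p1: "(4::real) ^ (i + 1) = 4 * E" unfolding E_def by simp
  have c1: "(3 * 4 ^ i * F < (3 * S + 1) * Suc H + 3 * 4 ^ i * G) \<longleftrightarrow>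
      3 * E * real F < (3 * real S + 1) * (real H + 1) + 3 * E * real G"
  proof -
    have "(3 * 4 ^ i * F < (3 * S + 1) * Suc H + 3 * 4 ^ i * G) \<longleftrightarrow>
        real (3 * 4 ^ i * F) < real ((3 * S + 1) * Suc H + 3 * 4 ^ i * G)" by (simp only: of_nat_less_iff)
    also have "\<dots> \<longleftrightarrow> 3 * E * real F < (3 * real S + 1) * (real H + 1) + 3 * E * real G"
      unfolding E_def by (simp add: algebra_simps)
    finally show ?thesis .
  qed
  have c2: "a < real S / E + 1 / (3 * E) \<longleftrightarrow> 3 * E * real F < (3 * real S + 1) * (real H + 1) + 3 * E * real G"
  proof -
    have "a < real S / E + 1 / (3 * E) \<longleftrightarrow> a < (3 * real S + 1) / (3 * E)" using E by (simp add: field_simps)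
    also have "\<dots> \<longleftrightarrow> a * (3 * E) < 3 * real S + 1" using E by (simp add: pos_less_divide_eq)
    also have "\<dots> \<longleftrightarrow> (real F - real G) * (3 * E) < (3 * real S + 1) * (real H + 1)"
      unfolding a_def using Hp by (simp add: field_simps)
    also have "\<dots> \<longleftrightarrow> 3 * E * real F < (3 * real S + 1) * (real H + 1) + 3 * E * real G"
      by (simp add: algebra_simps)
    finally show ?thesis .
  qed
  have ap': "\<bar>a - al\<bar> \<le> 1 / (16 * E + 1)" using ap x16 unfolding a_def by simp
  have small: "1 / (16 * E + 1) < 1 / (6 * E)" using E by (simp add: field_simps)
  show False
  proof (cases "3 * 4 ^ i * F < (3 * S + 1) * Suc H + 3 * 4 ^ i * G")
    case True
    hence d2: "d = 2" using d by simp
    have alo: "real S / E + 1 / (2 * E) \<le> al" using lo d2 p1 unfolding E_def by simp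
    have alt: "a < real S / E + 1 / (3 * E)" using True c1 c2 by simp
    have "1 / (6 * E) = 1 / (2 * E) - 1 / (3 * E)" using E by (simp add: field_simps)
    hence "al - a > 1 / (6 * E)" using alo alt by linarith
    thus False using ap' small by linarith
  next
    case False
    hence d0: "d = 0" using d by simp
    have ahi: "al \<le> real S / E + 1 / (6 * E)" using hi d0 p1 unfolding E_def by simp
    have age: "real S / E + 1 / (3 * E) \<le> a" using False c1 c2 by simp
    have "1 / (6 * E) = 1 / (3 * E) - 1 / (6 * E)" using E by (simp add: field_simps)
    hence "a - al \<ge> 1 / (6 * E)" using ahi age by linarith
    thus False using ap' small by linarith
  qed
qed

lemma unary_term: "grz_unary 2 f \<Longrightarrow> \<exists>t c K. good 1 (\<lambda>xs. f (xs ! 0)) t c \<and> okK K 1 t"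
  unfolding grz_unary_def by (rule grz2_term)

lemma alpha_notin2: "alpha \<notin> grz_reals 2"
proof
  assume "alpha \<in> grz_reals 2"
  then obtain f g h where uf: "grz_unary 2 f" and ug: "grz_unary 2 g" and uh: "grz_unary 2 h"
    and ap: "\<forall>x. \<bar>(real (f x) - real (g x)) / (real (h x) + 1) - alpha\<bar> \<le> 1 / (real x + 1)"
    unfolding grz_reals_def grz_computable_def by blast
  obtain tf cf Kf where f1: "good 1 (\<lambda>xs. f (xs ! 0)) tf cf" and f2: "okK Kf 1 tf" using unary_term[OF uf] by blast
  obtain tg cg Kg where g1: "good 1 (\<lambda>xs. g (xs ! 0)) tg cg" and g2: "okK Kg 1 tg" using unary_term[OF ug] by blast
  obtain th ch Kh where h1: "good 1 (\<lambda>xs. h (xs ! 0)) th ch" and h2: "okK Kh 1 th" using unary_term[OF uh] by blast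
  define p where "p = pair (tcode tf) (pair (tcode tg) (tcode th))"
  define q where "q = cf + cg + ch + Kf + Kg + Kh + 1"
  define i where "i = pair p q"
  define x where "x = (4::nat) ^ (i + 2)"
  have pi: "pi1 i = p" "pi2 i = q" "pi1 p = tcode tf" "pi1 (pi2 p) = tcode tg" "pi2 (pi2 p) = tcode th"
    unfolding i_def p_def by simp_all
  have pi_lt: "p < i" unfolding i_def by (rule pair_gt1)
  have cf: "tcode tf < i" using pair_gt1[of "tcode tf" "pair (tcode tg) (tcode th)"] pi_lt unfolding p_def by linarith
  have cgh: "tcode tg < p" "tcode th < p"
    using pair_gt1[of "tcode tg" "tcode th"] pair_gt2[of "tcode th" "tcode tg"]
      pair_gt2[of "pair (tcode tg) (tcode th)" "tcode tf"] unfolding p_def by linarith+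
  have vf: "dig (Suc ((x + 2) ^ q)) (tab ((x + 2) ^ q) (Suc ((x + 2) ^ q) ^ q) i i)
           (tcode tf * Suc ((x + 2) ^ q) ^ q + x) = f x"
    by (rule dig_val[OF f1 f2]) (use cf in \<open>simp_all add: q_def\<close>)
  have vg: "dig (Suc ((x + 2) ^ q)) (tab ((x + 2) ^ q) (Suc ((x + 2) ^ q) ^ q) i i)
           (tcode tg * Suc ((x + 2) ^ q) ^ q + x) = g x"
    by (rule dig_val[OF g1 g2]) (use cgh pi_lt in \<open>simp_all add: q_def\<close>)
  have vh: "dig (Suc ((x + 2) ^ q)) (tab ((x + 2) ^ q) (Suc ((x + 2) ^ q) ^ q) i i)
           (tcode th * Suc ((x + 2) ^ q) ^ q + x) = h x"
    by (rule dig_val[OF h1 h2]) (use cgh pi_lt in \<open>simp_all add: q_def\<close>)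
  have dd: "ddig i (Sseq i) = (if 3 * 4 ^ i * f x < (3 * Sseq i + 1) * Suc (h x) + 3 * 4 ^ i * g x then 2 else 0)"
    using ddig_eq[of i "Sseq i"] unfolding pi x_def[symmetric] vf vg vh .
  let ?d = "ddig i (Sseq i)"
  have SS: "real (Sseq (Suc i)) / 4 ^ Suc i = real (Sseq i) / 4 ^ i + real ?d / 4 ^ (i + 1)"
    by (simp add: Sseq_Suc field_simps)
  have bnd: "real (Sseq i) / 4 ^ i + real ?d / 4 ^ (i + 1) \<le> alpha \<and>
      alpha \<le> real (Sseq i) / 4 ^ i + real ?d / 4 ^ (i + 1) + (2/3) / 4 ^ (i + 1)"
    using Sseq_bounds[of "Suc i"] unfolding SS by simp
  have apx: "\<bar>(real (f x) - real (g x)) / (real (h x) + 1) - alpha\<bar> \<le> 1 / (real (4 ^ (i + 2) :: nat) + 1)"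
    using ap[rule_format, of x] unfolding x_def .
  show False by (rule contra[OF dd conjunct1[OF bnd] conjunct2[OF bnd] apx])
qed

theorem mainTheorem16:
  shows "grz_reals 2 \<subset> grz_reals 3"
proof -
  have sub: "grz_reals 2 \<subseteq> grz_reals 3"
    unfolding grz_reals_def grz_computable_def grz_unary_def using grz2_sub_grz3 by blast
  show ?thesis using sub alpha_in3 alpha_notin2 by blast
qed

end
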